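(* Let $n,p$ be positive integers such that $p$ is odd and $n$ and $n+p$ are relatively prime. Let $\gamma_{n,p}(t)=(\sin(nt),\sin((n+p)t))$ and $t_k=\frac{2\pi k}{4n(n+p)}$ for $k\in\mathbb{Z}$. Then the operator \[ \operatorname{E}_\gamma:\Pi^L_{n,p}\to\Pi^{\mathrm{trig},L}_{2n(n+p)},\qquad \operatorname{E}_\gamma P(t)=P(\gamma_{n,p}(t)),\ t\in[0,2\pi], \] is an isometric isomorphism from $\Pi^L_{n,p}$ equipped with the inner product $\langle f,g\rangle=\frac{1}{\pi^2}\int_{-1}^1\int_{-1}^1 f(x,y)\overline{g(x,y)}\frac{1}{\sqrt{1-x^2}\sqrt{1-y^2}}\,dx\,dy$ onto $\Pi^{\mathrm{trig},L}_{2n(n+p)}$ equipped with the inner product $\langle q_1,q_2\rangle=\frac{1}{2\pi}\int_0^{2\pi}q_1(t)\overline{q_2(t)}\,dt$.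
   Context: $T_i(x)=\cos(i\arccos x)$ is the Chebyshev polynomial of the first kind. The index set is $\Gamma^L_{n,p}=\{(i,j)\in\mathbb{N}_0^2: i+j\le 2n\}\cup\bigcup_{m=1}^{2p-1}\{(i,j)\in\mathbb{N}_0^2: i+j=2n+m,\ j<\frac{n(2p-m)}{p}\}$, and $\Pi^L_{n,p}=\operatorname{span}\{T_i(x)T_j(y):(i,j)\in\Gamma^L_{n,p}\}$ (real coefficients). Let $\Pi^{\mathrm{trig}}_{2n(n+p)}$ be the space of functions $q(t)=\sum_{m=0}^{2n(n+p)}a_m\cos(mt)+\sum_{m=1}^{2n(n+p)-1}b_m\sin(mt)$ with $a_m,b_m\in\mathbb{R}$, and let $\Pi^{\mathrm{trig},L}_{2n(n+p)}=\{q\in\Pi^{\mathrm{trig}}_{2n(n+p)}: q(t_k)=q(t_{k'})\text{ for all }k,k'\in\mathbb{Z}\text{ with }\gamma_{n,p}(t_k)=\gamma_{n,p}(t_{k'})\}$. *)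

theory Defs
  imports "HOL-Analysis.Analysis"
begin

definition cheb_T :: "nat \<Rightarrow> real \<Rightarrow> real" where
  "cheb_T i x = cos (real i * arccos x)"

definition GammaL :: "nat \<Rightarrow> nat \<Rightarrow> (nat \<times> nat) set" where
  "GammaL n p = {(i, j). i + j \<le> 2 * n} \<union>
     (\<Union>m\<in>{1..2*p-1}. {(i, j). i + j = 2 * n + m \<and>
          real j < real n * (2 * real p - real m) / real p})"

definition PiL :: "nat \<Rightarrow> nat \<Rightarrow> (real \<times> real \<Rightarrow> real) set" where
  "PiL n p = {P. \<exists>c :: nat \<times> nat \<Rightarrow> real.
      P = (\<lambda>(x, y). \<Sum>(i, j)\<in>GammaL n p. c (i, j) * cheb_T i x * cheb_T j y)}"

definition PiTrig :: "nat \<Rightarrow> (real \<Rightarrow> real) set" where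
  "PiTrig N = {q. \<exists>a b :: nat \<Rightarrow> real.
      q = (\<lambda>t. (\<Sum>m=0..N. a m * cos (real m * t)) + (\<Sum>m=1..N-1. b m * sin (real m * t)))}"

definition lissajous :: "nat \<Rightarrow> nat \<Rightarrow> real \<Rightarrow> real \<times> real" where
  "lissajous n p t = (sin (real n * t), sin (real (n + p) * t))"

definition tpt :: "nat \<Rightarrow> nat \<Rightarrow> int \<Rightarrow> real" where
  "tpt n p k = 2 * pi * real_of_int k / (4 * real n * real (n + p))"

definition PiTrigL :: "nat \<Rightarrow> nat \<Rightarrow> (real \<Rightarrow> real) set" where
  "PiTrigL n p = {q \<in> PiTrig (2 * n * (n + p)).
      \<forall>k k' :: int. lissajous n p (tpt n p k) = lissajous n p (tpt n p k') \<longrightarrow>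
         q (tpt n p k) = q (tpt n p k')}"

definition Egamma :: "nat \<Rightarrow> nat \<Rightarrow> (real \<times> real \<Rightarrow> real) \<Rightarrow> (real \<Rightarrow> real)" where
  "Egamma n p P = (\<lambda>t. P (lissajous n p t))"

text \<open>Inner products (all functions are real valued, so conjugation is the identity).\<close>
definition cheb_inner :: "(real \<times> real \<Rightarrow> real) \<Rightarrow> (real \<times> real \<Rightarrow> real) \<Rightarrow> real" where
  "cheb_inner f g = 1 / pi\<^sup>2 *
     (LBINT x=-1..1. (LBINT y=-1..1.
        f (x, y) * g (x, y) * (1 / (sqrt (1 - x\<^sup>2) * sqrt (1 - y\<^sup>2)))))"

definition trig_inner :: "(real \<Rightarrow> real) \<Rightarrow> (real \<Rightarrow> real) \<Rightarrow> real" where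
  "trig_inner q1 q2 = 1 / (2 * pi) * (LBINT t=0..2*pi. q1 t * q2 t)"

end

theory Submission
  imports Defs "HOL-Library.Function_Algebras"
begin

lemma GammaL_iff:
  assumes n: "n>0" and p: "p>0"
  shows "(i,j) \<in> GammaL n p \<longleftrightarrow> n*i + (n+p)*j < 2*n*(n+p) \<or> (i,j) = (0,2*n)"
proof
  assume "(i,j) \<in> GammaL n p"
  then consider "i + j \<le> 2*n" | m where "m \<in> {1..2*p-1}" "i+j = 2*n+m" "real j < real n * (2 * real p - real m) / real p"
    unfolding GammaL_def by auto
  then show "n*i + (n+p)*j < 2*n*(n+p) \<or> (i,j) = (0,2*n)"
  proof cases
    case 1
    show ?thesis
    proof (cases "j = 2*n")
      case True then show ?thesis using 1 by auto
    next
      case False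
      then have "j < 2*n" using 1 by auto
      then have "p*j < p*(2*n)" using p by simp
      moreover have "n*i + (n+p)*j = n*(i+j) + p*j" by algebra
      moreover have "n*(i+j) \<le> n*(2*n)" using 1 by simp
      ultimately have "n*i + (n+p)*j < n*(2*n) + p*(2*n)" by linarith
      then show ?thesis by (simp add: algebra_simps)
    qed
  next
    case (2 m)
    have "real p * real j < real n * (2 * real p - real m)"
      using 2(3) p by (simp add: field_simps)
    have "m \<le> 2*p" using 2(1) by auto
    then have "real (2*p-m) = 2*real p - real m" by (simp add: of_nat_diff)
    then have "real (p*j) < real (n*(2*p-m))" using \<open>real p * real j < _\<close> by simp
    then have A: "p*j < n*(2*p-m)" by linarith
    have "n*(2*p-m) + n*m = n*(2*p)" using \<open>m \<le> 2*p\<close> proof -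
      have "n*(2*p-m) + n*m = n*((2*p-m)+m)" by (simp only: distrib_left)
      then show ?thesis using \<open>m \<le> 2*p\<close> by simp
    qed
    moreover have "n*i + (n+p)*j = n*(2*n+m) + p*j"
    proof -
      have "n*(i+j) = n*(2*n+m)" using 2(2) by simp
      then show ?thesis by (simp add: algebra_simps)
    qed
    ultimately have "n*i + (n+p)*j < n*(2*n) + n*(2*p)" using A by (simp add: algebra_simps)
    then show ?thesis by (simp add: algebra_simps)
  qed
next
  assume H: "n*i + (n+p)*j < 2*n*(n+p) \<or> (i,j) = (0,2*n)"
  show "(i,j) \<in> GammaL n p"
  proof (cases "i + j \<le> 2*n")
    case True then show ?thesis unfolding GammaL_def by auto
  next
    case False
    then have H: "n*i + (n+p)*j < 2*n*(n+p)" using H by auto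
    define m where "m = i + j - 2*n"
    have m1: "m \<ge> 1" and ij: "i + j = 2*n+m" using False by (auto simp: m_def)
    have "n*i + (n+p)*j = n*(2*n) + n*m + p*j"
    proof -
      have "n*(i+j) = n*(2*n+m)" using ij by simp
      then show ?thesis by (simp add: algebra_simps)
    qed
    then have B: "n*m + p*j < n*(2*p)" using H by (simp add: algebra_simps)
    then have "n*m < n*(2*p)" by linarith
    then have m2: "m < 2*p" using n by simp
    have "real (n*m + p*j) < real (n*(2*p))" using B by linarith
    then have "real p * real j < real n * (2 * real p - real m)" by (simp add: algebra_simps)
    then have "real j < real n * (2 * real p - real m) / real p" using p by (simp add: field_simps)
    then show ?thesis unfolding GammaL_def using m1 m2 ij by auto
  qed
qed


lemma ili_sum:
  fixes f :: "'s \<Rightarrow> real \<Rightarrow> real"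
  assumes "finite S" "\<And>s. s \<in> S \<Longrightarrow> interval_lebesgue_integrable M a b (f s)"
  shows "interval_lebesgue_integrable M a b (\<lambda>x. \<Sum>s\<in>S. f s x) \<and>
         interval_lebesgue_integral M a b (\<lambda>x. \<Sum>s\<in>S. f s x) = (\<Sum>s\<in>S. interval_lebesgue_integral M a b (f s))"
  using assms
proof (induction S rule: finite_induct)
  case empty
  then show ?case by (simp add: interval_lebesgue_integrable_def interval_lebesgue_integral_def set_integrable_def set_lebesgue_integral_def)
next
  case (insert s S)
  then have I: "interval_lebesgue_integrable M a b (f s)" by auto
  from insert have IH: "interval_lebesgue_integrable M a b (\<lambda>x. \<Sum>s\<in>S. f s x)"
     "interval_lebesgue_integral M a b (\<lambda>x. \<Sum>s\<in>S. f s x) = (\<Sum>s\<in>S. interval_lebesgue_integral M a b (f s))" by auto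
  show ?case using interval_lebesgue_integral_add[OF I IH(1)] IH(2) insert(1,2) by simp
qed

lemma cos_rec: "cos (real (Suc (Suc i)) * x) = 2 * cos x * cos (real (Suc i) * x) - cos (real i * x)"
proof -
  have a: "real (Suc (Suc i)) * x = real (Suc i) * x + x" and b: "real i * x = real (Suc i) * x - x"
    by (simp_all add: algebra_simps)
  show ?thesis unfolding a b cos_add cos_diff by (simp add: algebra_simps)
qed

lemma cos_mult_eq: assumes "cos s = cos t" shows "cos (real i * s) = cos (real i * t)"
proof -
  have "cos (real i * s) = cos (real i * t) \<and> cos (real (Suc i) * s) = cos (real (Suc i) * t)" for i
  proof (induction i)
    case 0 then show ?case using assms by simp
  next
    case (Suc i) then show ?case using assms by (simp only: cos_rec)
  qed
  then show ?thesis by blast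
qed

lemma cheb_cos: "cheb_T i (cos t) = cos (real i * t)"
  unfolding cheb_T_def by (rule cos_mult_eq) simp

lemma cheb_sin: "cheb_T i (sin u) = cos (real i * (pi/2 - u))"
  by (simp add: sin_cos_eq cheb_cos)

lemma cheb_bound: "\<bar>cheb_T i x\<bar> \<le> 1" unfolding cheb_T_def by simp

lemma EB: "Egamma n p (\<lambda>(x,y). cheb_T i x * cheb_T j y) t =
   cos (real i * (pi/2 - real n * t)) * cos (real j * (pi/2 - real (n+p) * t))"
  unfolding Egamma_def lissajous_def by (simp add: cheb_sin)

lemma lbint_cos_lin:
  fixes K :: int
  shows "(LBINT t=0..2*pi. cos (\<alpha> - real_of_int K * t)) = (if K = 0 then 2*pi*cos \<alpha> else 0)"
proof (cases "K = 0")
  case True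
  have "(LBINT t=ereal 0..ereal (2*pi). cos (\<alpha> - real_of_int K * t)) = (\<lambda>t. t * cos \<alpha>) (2*pi) - (\<lambda>t. t * cos \<alpha>) 0"
    by (rule interval_integral_FTC_finite)
       (auto simp: True intro!: continuous_intros derivative_eq_intros simp flip: has_real_derivative_iff_has_vector_derivative)
  then show ?thesis using True by (simp add: zero_ereal_def)
next
  case False
  let ?F = "\<lambda>t. - sin (\<alpha> - real_of_int K * t) / real_of_int K"
  have "(LBINT t=ereal 0..ereal (2*pi). cos (\<alpha> - real_of_int K * t)) = ?F (2*pi) - ?F 0"
    by (rule interval_integral_FTC_finite)
       (auto simp: False intro!: continuous_intros derivative_eq_intros simp flip: has_real_derivative_iff_has_vector_derivative)
  moreover have "sin (\<alpha> - real_of_int K * (2*pi)) = sin \<alpha>"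
  proof -
    have c: "cos (real_of_int K * (2*pi)) = 1" using cos_int_2pin[of K] by (simp add: mult.commute)
    have s: "sin (real_of_int K * (2*pi)) = 0" using sin_int_2pin[of K] by (simp add: mult.commute)
    show ?thesis by (simp add: sin_diff c s)
  qed
  ultimately show ?thesis using False by (simp add: zero_ereal_def)
qed

definition Zt :: "nat \<Rightarrow> nat \<Rightarrow> int \<Rightarrow> int \<Rightarrow> real" where
  "Zt n q A B = (if A * int n + B * int q = 0 then cos (real_of_int (A+B) * pi / 2) else 0)"

lemma trig_prod_int:
  fixes A B :: int
  shows "(LBINT t=0..2*pi. cos (real_of_int A * (pi/2 - real n * t)) * cos (real_of_int B * (pi/2 - real q * t)))
     = pi * (Zt n q A B + Zt n q A (-B))"
proof -
  have e: "cos (real_of_int A * (pi/2 - real n * t)) * cos (real_of_int B * (pi/2 - real q * t)) =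
      cos (real_of_int (A-B) * pi/2 - real_of_int (A * int n - B * int q) * t) / 2 +
      cos (real_of_int (A+B) * pi/2 - real_of_int (A * int n + B * int q) * t) / 2" for t
  proof -
    have a1: "real_of_int A * (pi/2 - real n * t) - real_of_int B * (pi/2 - real q * t) = 
       real_of_int (A-B) * pi/2 - real_of_int (A * int n - B * int q) * t" by (simp add: field_simps)
    have a2: "real_of_int A * (pi/2 - real n * t) + real_of_int B * (pi/2 - real q * t) = 
       real_of_int (A+B) * pi/2 - real_of_int (A * int n + B * int q) * t" by (simp add: field_simps)
    show ?thesis unfolding cos_times_cos a1 a2 by (simp add: add_divide_distrib)
  qed
  have i1: "interval_lebesgue_integrable lborel 0 (2*pi) (\<lambda>t. cos (real_of_int (A-B) * pi/2 - real_of_int (A * int n - B * int q) * t) / 2)"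
    unfolding zero_ereal_def by (rule interval_integrable_continuous_on) (auto intro!: continuous_intros)
  have i2: "interval_lebesgue_integrable lborel 0 (2*pi) (\<lambda>t. cos (real_of_int (A+B) * pi/2 - real_of_int (A * int n + B * int q) * t) / 2)"
    unfolding zero_ereal_def by (rule interval_integrable_continuous_on) (auto intro!: continuous_intros)
  have "(LBINT t=0..2*pi. cos (real_of_int A * (pi/2 - real n * t)) * cos (real_of_int B * (pi/2 - real q * t)))
     = (LBINT t=0..2*pi. cos (real_of_int (A-B) * pi/2 - real_of_int (A * int n - B * int q) * t) / 2) +
       (LBINT t=0..2*pi. cos (real_of_int (A+B) * pi/2 - real_of_int (A * int n + B * int q) * t) / 2)"
    unfolding e using interval_lebesgue_integral_add(2)[OF i1 i2] by simp
  also have "\<dots> = pi * (Zt n q A B + Zt n q A (-B))"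
    unfolding interval_lebesgue_integral_divide lbint_cos_lin Zt_def
    by (simp add: algebra_simps)
  finally show ?thesis .
qed


lemma cos_odd_half_pi: fixes m :: int assumes "odd m" shows "cos (real_of_int m * pi / 2) = 0"
proof -
  obtain l where m: "m = 2*l+1" using assms by (metis oddE)
  have e: "real_of_int m * pi / 2 = pi * real_of_int l + pi/2" by (simp add: m field_simps)
  have "cos (real_of_int m * pi / 2) = cos (pi * real_of_int l + pi/2)" by (simp only: e)
  also have "\<dots> = 0" unfolding cos_add by simp
  finally show ?thesis .
qed

lemma Gamma_bound:
  assumes "n>0" "p>0" "(i,j) \<in> GammaL n p"
  shows "n*i + (n+p)*j \<le> 2*n*(n+p)" "n*i + (n+p)*j = 2*n*(n+p) \<Longrightarrow> i = 0 \<and> j = 2*n"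
  using GammaL_iff[OF assms(1,2), of i j] assms(3) by (auto simp: algebra_simps)

lemma Zt_val:
  fixes A B :: int
  assumes n: "n>0" and p: "p>0" and op: "odd p" and cp: "coprime n (n+p)"
    and G1: "(i,j) \<in> GammaL n p" and G2: "(i',j') \<in> GammaL n p"
    and bA: "\<bar>A\<bar> \<le> int (i+i')" and bB: "\<bar>B\<bar> \<le> int (j+j')"
  shows "Zt n (n+p) A B = (if A = 0 \<and> B = 0 then 1 else 0)"
proof (cases "A * int n + B * int (n+p) = 0")
  case False then show ?thesis unfolding Zt_def by auto
next
  case True
  define q where "q = n + p"
  have q: "q > 0" using n by (simp add: q_def)
  have "coprime q n" using cp by (simp add: q_def coprime_commute)
  then have cpi: "coprime (int q) (int n)" by simp
  have eq: "A * int n = - B * int q" using True by (simp add: q_def)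
  then have "int q dvd A * int n" by simp
  then have "int q dvd A" using cpi by (simp add: coprime_dvd_mult_left_iff)
  then obtain k where k: "A = int q * k" by (auto elim: dvdE)
  have "int q * (k * int n) = int q * (- B)" using eq by (simp add: k algebra_simps)
  then have "k * int n = - B" using q by (subst (asm) mult_cancel_left) simp
  then have Bk: "B = - k * int n" by simp
  have sum: "A + B = k * int p" by (simp add: k Bk q_def algebra_simps)
  show ?thesis
  proof (cases "k = 0")
    case True then show ?thesis using \<open>A * int n + B * int (n+p) = 0\<close> by (simp add: Zt_def k Bk)
  next
    case knz: False
    have Anz: "A \<noteq> 0" using knz q k by simp
    show ?thesis
    proof (cases "odd k")
      case True
      then have "odd (A + B)" using op by (simp add: sum)
      then have c: "cos (real_of_int (A+B) * pi / 2) = 0" by (rule cos_odd_half_pi)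
      show ?thesis unfolding Zt_def using \<open>A * int n + B * int (n+p) = 0\<close> Anz c
        by simp
    next
      case False
      then have "\<bar>k\<bar> \<ge> 2" using knz by (auto elim!: evenE)
      then have "int q * 2 \<le> int q * \<bar>k\<bar>" "int n * 2 \<le> int n * \<bar>k\<bar>"
        by (simp_all add: mult_left_mono)
      then have "\<bar>A\<bar> \<ge> 2 * int q" "\<bar>B\<bar> \<ge> 2 * int n"
        by (simp_all add: k Bk abs_mult mult.commute)
      then have h1: "2*q \<le> i + i'" "2*n \<le> j + j'" using bA bB by (auto simp: q_def)
      have g1: "n*i + q*j \<le> 2*n*q" and g2: "n*i' + q*j' \<le> 2*n*q"
        using Gamma_bound[OF n p G1] Gamma_bound[OF n p G2] by (auto simp: q_def)
      have "n*(2*q) + q*(2*n) \<le> n*(i+i') + q*(j+j')"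
        using h1 by (intro add_mono mult_left_mono) auto
      then have "n*i + q*j = 2*n*q \<and> n*i' + q*j' = 2*n*q" using g1 g2 by (simp add: algebra_simps)
      then have "i = 0 \<and> i' = 0"
        using Gamma_bound(2)[OF n p G1] Gamma_bound(2)[OF n p G2] by (auto simp: q_def)
      then show ?thesis using h1 q by simp
    qed
  qed
qed

definition wt :: "nat \<Rightarrow> nat \<Rightarrow> real" where
  "wt i i' = (if i = i' then 1 else 0) + (if i = 0 \<and> i' = 0 then 1 else 0)"

definition CC :: "nat \<Rightarrow> nat \<Rightarrow> int \<Rightarrow> int \<Rightarrow> real \<Rightarrow> real" where
  "CC n q A B t = cos (real_of_int A * (pi/2 - real n * t)) * cos (real_of_int B * (pi/2 - real q * t))"

lemma CC_int: "interval_lebesgue_integrable lborel 0 (2*pi) (CC n q A B)"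
  unfolding zero_ereal_def CC_def by (rule interval_integrable_continuous_on) (auto intro!: continuous_intros)

lemma CC_lbint:
  assumes n: "n>0" and p: "p>0" and op: "odd p" and cp: "coprime n (n+p)"
    and G1: "(i,j) \<in> GammaL n p" and G2: "(i',j') \<in> GammaL n p"
    and bA: "\<bar>A\<bar> \<le> int (i+i')" and bB: "\<bar>B\<bar> \<le> int (j+j')"
  shows "(LBINT t=0..2*pi. CC n (n+p) A B t) = (if A = 0 \<and> B = 0 then 2*pi else 0)"
proof -
  have "(LBINT t=0..2*pi. CC n (n+p) A B t) = pi * (Zt n (n+p) A B + Zt n (n+p) A (-B))"
    unfolding CC_def by (rule trig_prod_int)
  also have "\<dots> = (if A = 0 \<and> B = 0 then 2*pi else 0)"
    using Zt_val[OF assms] Zt_val[OF n p op cp G1 G2 bA, of "-B"] bB by simp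
  finally show ?thesis .
qed

lemma EB_prod:
  "Egamma n p (\<lambda>(x,y). cheb_T i x * cheb_T j y) t * Egamma n p (\<lambda>(x,y). cheb_T i' x * cheb_T j' y) t =
   (CC n (n+p) (int i - int i') (int j - int j') t + CC n (n+p) (int i - int i') (int j + int j') t
   + CC n (n+p) (int i + int i') (int j - int j') t + CC n (n+p) (int i + int i') (int j + int j') t) / 4"
  (is "_ = ?rhs")
proof -
  let ?f = "pi/2 - real n * t" and ?g = "pi/2 - real (n+p) * t"
  have a: "cos (real i * ?f) * cos (real i' * ?f) = (cos (real_of_int (int i - int i') * ?f) + cos (real_of_int (int i + int i') * ?f)) / 2"
  proof -
    have "real i * ?f - real i' * ?f = real_of_int (int i - int i') * ?f" "real i * ?f + real i' * ?f = real_of_int (int i + int i') * ?f"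
      by (simp_all only: of_int_diff of_int_add of_int_of_nat_eq left_diff_distrib distrib_right)
    then show ?thesis unfolding cos_times_cos by simp
  qed
  have b: "cos (real j * ?g) * cos (real j' * ?g) = (cos (real_of_int (int j - int j') * ?g) + cos (real_of_int (int j + int j') * ?g)) / 2"
  proof -
    have "real j * ?g - real j' * ?g = real_of_int (int j - int j') * ?g" "real j * ?g + real j' * ?g = real_of_int (int j + int j') * ?g"
      by (simp_all only: of_int_diff of_int_add of_int_of_nat_eq left_diff_distrib distrib_right)
    then show ?thesis unfolding cos_times_cos by simp
  qed
  have "Egamma n p (\<lambda>(x,y). cheb_T i x * cheb_T j y) t * Egamma n p (\<lambda>(x,y). cheb_T i' x * cheb_T j' y) t
     = (cos (real i * ?f) * cos (real i' * ?f)) * (cos (real j * ?g) * cos (real j' * ?g))"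
    unfolding EB by (simp add: algebra_simps)
  also have "\<dots> = ?rhs" unfolding a b CC_def by (simp add: algebra_simps add_divide_distrib)
  finally show ?thesis .
qed

lemma EB_orth:
  assumes n: "n>0" and p: "p>0" and op: "odd p" and cp: "coprime n (n+p)"
    and G1: "(i,j) \<in> GammaL n p" and G2: "(i',j') \<in> GammaL n p"
  shows "(LBINT t=0..2*pi. Egamma n p (\<lambda>(x,y). cheb_T i x * cheb_T j y) t * Egamma n p (\<lambda>(x,y). cheb_T i' x * cheb_T j' y) t)
     = pi / 2 * wt i i' * wt j j'"
proof -
  let ?C = "CC n (n+p)"
  have L: "\<And>A B. \<bar>A\<bar> \<le> int (i+i') \<Longrightarrow> \<bar>B\<bar> \<le> int (j+j') \<Longrightarrow> (LBINT t=0..2*pi. ?C A B t) = (if A = 0 \<and> B = 0 then 2*pi else 0)"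
    by (rule CC_lbint[OF assms])
  have I: "\<And>A B. interval_lebesgue_integrable lborel 0 (2*pi) (?C A B)" by (rule CC_int)
  have "(LBINT t=0..2*pi. Egamma n p (\<lambda>(x,y). cheb_T i x * cheb_T j y) t * Egamma n p (\<lambda>(x,y). cheb_T i' x * cheb_T j' y) t)
    = (LBINT t=0..2*pi. (?C (int i - int i') (int j - int j') t + ?C (int i - int i') (int j + int j') t
   + ?C (int i + int i') (int j - int j') t + ?C (int i + int i') (int j + int j') t) / 4)"
    unfolding EB_prod ..
  also have "\<dots> = ((LBINT t=0..2*pi. ?C (int i - int i') (int j - int j') t) + (LBINT t=0..2*pi. ?C (int i - int i') (int j + int j') t)
   + (LBINT t=0..2*pi. ?C (int i + int i') (int j - int j') t) + (LBINT t=0..2*pi. ?C (int i + int i') (int j + int j') t)) / 4"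
    by (simp add: interval_lebesgue_integral_add I)
  also have "\<dots> = pi / 2 * wt i i' * wt j j'"
    by (subst L, simp, simp)+ (auto simp: wt_def)
  finally show ?thesis .
qed


lemma ereal_m1: "(-1::ereal) = ereal (-1)" by (simp add: one_ereal_def)
lemma ereal_m1_le: "(-1::ereal) \<le> 1" by (simp add: one_ereal_def)

lemma lbint_arccos:
  fixes G g :: "real \<Rightarrow> real"
  assumes D: "\<And>\<theta>. (G has_real_derivative g \<theta>) (at \<theta>)" and C: "continuous_on UNIV g" and P: "\<And>\<theta>. g \<theta> \<ge> 0"
  shows "set_integrable lborel (einterval (-1) 1) (\<lambda>x. g (arccos x) * (1 / sqrt (1 - x\<^sup>2)))"
    and "(LBINT x=-1..1. g (arccos x) * (1 / sqrt (1 - x\<^sup>2))) = G pi - G 0"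
proof -
  let ?F = "\<lambda>x. - G (arccos x)"
  note m1 = ereal_m1
  have a: "(-1::ereal) < 1" by (simp add: one_ereal_def)
  have FD: "DERIV ?F x :> g (arccos x) * (1 / sqrt (1 - x\<^sup>2))" if "-1 < ereal x" "ereal x < 1" for x
  proof -
    have x: "-1 < x" "x < 1" using that by (simp_all add: m1)
    have "DERIV (\<lambda>x. G (arccos x)) x :> g (arccos x) * inverse (- sqrt (1 - x\<^sup>2))"
      by (rule DERIV_chain2[OF D DERIV_arccos[OF x]])
    then have "DERIV ?F x :> - (g (arccos x) * inverse (- sqrt (1 - x\<^sup>2)))"
      by (rule DERIV_minus)
    then show ?thesis by (simp add: divide_inverse)
  qed
  have gc: "isCont g y" for y using C by (simp add: continuous_on_eq_continuous_at)
  have Gc: "isCont G y" for y using D DERIV_isCont by blast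
  have FC: "isCont (\<lambda>x. g (arccos x) * (1 / sqrt (1 - x\<^sup>2))) x" if "-1 < ereal x" "ereal x < 1" for x
  proof -
    have x: "-1 < x" "x < 1" using that by (simp_all add: m1)
    then have "x\<^sup>2 < 1" by (simp add: abs_square_less_1)
    then have "sqrt (1 - x\<^sup>2) \<noteq> 0" by simp
    then show ?thesis using x
      by (intro continuous_intros isCont_o2[OF isCont_arccos[OF x] gc]) auto
  qed
  have NN: "AE x in lborel. -1 < ereal x \<longrightarrow> ereal x < 1 \<longrightarrow> 0 \<le> g (arccos x) * (1 / sqrt (1 - x\<^sup>2))"
  proof (intro AE_I2 impI)
    fix x assume "-1 < ereal x" "ereal x < 1"
    then have "-1 < x" "x < 1" by (simp_all add: m1)
    then have "x\<^sup>2 < 1" by (simp add: abs_square_less_1)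
    then show "0 \<le> g (arccos x) * (1 / sqrt (1 - x\<^sup>2))" using P by simp
  qed
  have Fcont: "continuous_on {-1..1} ?F"
    by (intro continuous_intros continuous_on_compose2[OF continuous_at_imp_continuous_on[of UNIV G] continuous_on_arccos']) (auto simp: Gc)
  have A: "((?F \<circ> real_of_ereal) \<longlongrightarrow> ?F (-1)) (at_right (-1))"
    unfolding m1 ereal_tendsto_simps1 by (rule continuous_on_Icc_at_rightD[OF Fcont]) simp
  have B: "((?F \<circ> real_of_ereal) \<longlongrightarrow> ?F 1) (at_left 1)"
    unfolding one_ereal_def ereal_tendsto_simps1 by (rule continuous_on_Icc_at_leftD[OF Fcont]) simp
  note R = interval_integral_FTC_nonneg[OF a FD FC NN A B]
  show "set_integrable lborel (einterval (-1) 1) (\<lambda>x. g (arccos x) * (1 / sqrt (1 - x\<^sup>2)))" by (rule R(1))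
  show "(LBINT x=-1..1. g (arccos x) * (1 / sqrt (1 - x\<^sup>2))) = G pi - G 0" using R(2) by simp
qed

definition Sf :: "int \<Rightarrow> real \<Rightarrow> real" where
  "Sf k \<theta> = (if k = 0 then \<theta> else sin (real_of_int k * \<theta>) / real_of_int k)"

lemma Sf_deriv: "(Sf k has_real_derivative cos (real_of_int k * \<theta>)) (at \<theta>)"
proof (cases "k = 0")
  case True then show ?thesis unfolding Sf_def by (auto intro!: derivative_eq_intros)
next
  case False
  have "((\<lambda>\<theta>. sin (real_of_int k * \<theta>) / real_of_int k) has_real_derivative cos (real_of_int k * \<theta>)) (at \<theta>)"
    using False by (auto intro!: derivative_eq_intros)
  then show ?thesis unfolding Sf_def using False by simp
qed

lemma Sf_0: "Sf k 0 = 0" unfolding Sf_def by simp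
lemma Sf_pi: "Sf k pi = (if k = 0 then pi else 0)"
  unfolding Sf_def using sin_npi_int[of k] by (simp add: mult.commute)

definition Gf :: "nat \<Rightarrow> nat \<Rightarrow> real \<Rightarrow> real" where
  "Gf i i' \<theta> = (Sf (int i - int i') \<theta> + Sf (int i + int i') \<theta>) / 2"

lemma Gf_deriv: "(Gf i i' has_real_derivative cos (real i * \<theta>) * cos (real i' * \<theta>)) (at \<theta>)"
proof -
  have "(Gf i i' has_real_derivative (cos (real_of_int (int i - int i') * \<theta>) + cos (real_of_int (int i + int i') * \<theta>)) / 2) (at \<theta>)"
    unfolding Gf_def[abs_def] by (auto intro!: derivative_eq_intros Sf_deriv)
  moreover have "(cos (real_of_int (int i - int i') * \<theta>) + cos (real_of_int (int i + int i') * \<theta>)) / 2 = cos (real i * \<theta>) * cos (real i' * \<theta>)"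
  proof -
    have "real i * \<theta> - real i' * \<theta> = real_of_int (int i - int i') * \<theta>" "real i * \<theta> + real i' * \<theta> = real_of_int (int i + int i') * \<theta>"
      by (simp_all only: of_int_diff of_int_add of_int_of_nat_eq left_diff_distrib distrib_right)
    then show ?thesis unfolding cos_times_cos by simp
  qed
  ultimately show ?thesis by simp
qed

lemma J_lbint:
  shows "interval_lebesgue_integrable lborel (-1) 1 (\<lambda>x. cheb_T i x * cheb_T i' x * (1 / sqrt (1 - x\<^sup>2)))"
    and "(LBINT x=-1..1. cheb_T i x * cheb_T i' x * (1 / sqrt (1 - x\<^sup>2))) = pi / 2 * wt i i'"
proof -
  have D1: "((\<lambda>\<theta>. Gf i i' \<theta> + \<theta>) has_real_derivative cos (real i * \<theta>) * cos (real i' * \<theta>) + 1) (at \<theta>)" for \<theta>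
    by (auto intro!: derivative_eq_intros Gf_deriv)
  have C1: "continuous_on UNIV (\<lambda>\<theta>. cos (real i * \<theta>) * cos (real i' * \<theta>) + 1)" by (intro continuous_intros)
  have P1: "cos (real i * \<theta>) * cos (real i' * \<theta>) + 1 \<ge> 0" for \<theta>
  proof -
    have "\<bar>cos (real i * \<theta>) * cos (real i' * \<theta>)\<bar> \<le> 1" by (simp add: abs_mult mult_le_one)
    then show ?thesis by linarith
  qed
  note R1 = lbint_arccos[OF D1 C1 P1]
  have D2: "((\<lambda>\<theta>. \<theta>) has_real_derivative 1) (at \<theta>)" for \<theta> by (auto intro!: derivative_eq_intros)
  note R2 = lbint_arccos[of "\<lambda>\<theta>. \<theta>" "\<lambda>_. 1", OF D2]
  let ?h = "\<lambda>x. (cos (real i * arccos x) * cos (real i' * arccos x) + 1) * (1 / sqrt (1 - x\<^sup>2))"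
  let ?w = "\<lambda>x. 1 * (1 / sqrt (1 - x\<^sup>2))"
  have I1: "interval_lebesgue_integrable lborel (-1) 1 ?h" using R1(1) by (simp add: interval_lebesgue_integrable_def ereal_m1_le)
  have I2: "interval_lebesgue_integrable lborel (-1) 1 ?w" using R2(1) by (simp add: interval_lebesgue_integrable_def ereal_m1_le)
  have eq: "(\<lambda>x. cheb_T i x * cheb_T i' x * (1 / sqrt (1 - x\<^sup>2))) = (\<lambda>x. ?h x - ?w x)"
    by (rule ext) (simp add: cheb_T_def algebra_simps)
  show "interval_lebesgue_integrable lborel (-1) 1 (\<lambda>x. cheb_T i x * cheb_T i' x * (1 / sqrt (1 - x\<^sup>2)))"
    unfolding eq by (rule interval_lebesgue_integral_diff(1)[OF I1 I2])
  have "(LBINT x=-1..1. cheb_T i x * cheb_T i' x * (1 / sqrt (1 - x\<^sup>2))) = (LBINT x=-1..1. ?h x) - (LBINT x=-1..1. ?w x)"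
    unfolding eq by (rule interval_lebesgue_integral_diff(2)[OF I1 I2])
  also have "\<dots> = (Gf i i' pi + pi - (Gf i i' 0 + 0)) - (pi - 0)"
    using R1(2) R2(2) by simp
  also have "\<dots> = pi / 2 * wt i i'"
    unfolding Gf_def Sf_0 Sf_pi wt_def by auto
  finally show "(LBINT x=-1..1. cheb_T i x * cheb_T i' x * (1 / sqrt (1 - x\<^sup>2))) = pi / 2 * wt i i'" .
qed


definition lc :: "nat \<Rightarrow> nat \<Rightarrow> (nat \<times> nat \<Rightarrow> real) \<Rightarrow> real \<times> real \<Rightarrow> real" where
  "lc n p c = (\<lambda>(x, y). \<Sum>(i, j)\<in>GammaL n p. c (i, j) * cheb_T i x * cheb_T j y)"

lemma PiL_iff: "P \<in> PiL n p \<longleftrightarrow> (\<exists>c. P = lc n p c)"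
  unfolding PiL_def lc_def by auto

definition ebf :: "nat \<Rightarrow> nat \<Rightarrow> nat \<times> nat \<Rightarrow> real \<Rightarrow> real" where
  "ebf n p a t = cos (real (fst a) * (pi/2 - real n * t)) * cos (real (snd a) * (pi/2 - real (n+p) * t))"

lemma E_lc: "Egamma n p (lc n p c) t = (\<Sum>a\<in>GammaL n p. c a * ebf n p a t)"
  unfolding Egamma_def lc_def lissajous_def ebf_def
  by (auto simp: cheb_sin split_def intro!: sum.cong)

lemma finite_GammaL: "finite (GammaL n p)"
proof -
  have "GammaL n p \<subseteq> {..2*n+2*p} \<times> {..2*n+2*p}"
    unfolding GammaL_def by auto
  then show ?thesis by (rule finite_subset) auto
qed

lemma ebf_orth:
  assumes n: "n>0" and p: "p>0" and op: "odd p" and cp: "coprime n (n+p)"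
    and "a \<in> GammaL n p" "b \<in> GammaL n p"
  shows "(LBINT t=0..2*pi. ebf n p a t * ebf n p b t) = pi / 2 * wt (fst a) (fst b) * wt (snd a) (snd b)"
proof -
  obtain i j i' j' where a: "a = (i,j)" and b: "b = (i',j')" by fastforce
  show ?thesis using EB_orth[OF n p op cp, of i j i' j'] assms(5,6) unfolding a b ebf_def EB by simp
qed

lemma ebf_int: "interval_lebesgue_integrable lborel 0 (2*pi) (\<lambda>t. ebf n p a t * ebf n p b t)"
  unfolding zero_ereal_def ebf_def by (rule interval_integrable_continuous_on) (auto intro!: continuous_intros)

definition ww :: "nat \<times> nat \<Rightarrow> nat \<times> nat \<Rightarrow> real" where
  "ww a b = wt (fst a) (fst b) * wt (snd a) (snd b)"

definition Qf :: "nat \<Rightarrow> nat \<Rightarrow> (nat \<times> nat \<Rightarrow> real) \<Rightarrow> (nat \<times> nat \<Rightarrow> real) \<Rightarrow> real" where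
  "Qf n p c d = (\<Sum>a\<in>GammaL n p. \<Sum>b\<in>GammaL n p. c a * d b * ww a b / 4)"

lemma trig_inner_lc:
  assumes n: "n>0" and p: "p>0" and op: "odd p" and cp: "coprime n (n+p)"
  shows "trig_inner (Egamma n p (lc n p c)) (Egamma n p (lc n p d)) = Qf n p c d"
proof -
  let ?G = "GammaL n p"
  have e: "Egamma n p (lc n p c) t * Egamma n p (lc n p d) t = (\<Sum>a\<in>?G. \<Sum>b\<in>?G. (c a * d b) * (ebf n p a t * ebf n p b t))" for t
    unfolding E_lc sum_product by (simp add: algebra_simps)
  have I: "interval_lebesgue_integrable lborel 0 (2*pi) (\<lambda>t. (c a * d b) * (ebf n p a t * ebf n p b t))" for a b
    using ebf_int by simp
  have I2: "interval_lebesgue_integrable lborel 0 (2*pi) (\<lambda>t. \<Sum>b\<in>?G. (c a * d b) * (ebf n p a t * ebf n p b t))" for a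
    using ili_sum[OF finite_GammaL[of n p], where f="\<lambda>b t. (c a * d b) * (ebf n p a t * ebf n p b t)"] I by blast
  have "(LBINT t=0..2*pi. Egamma n p (lc n p c) t * Egamma n p (lc n p d) t)
     = (\<Sum>a\<in>?G. LBINT t=0..2*pi. (\<Sum>b\<in>?G. (c a * d b) * (ebf n p a t * ebf n p b t)))"
    unfolding e using ili_sum[OF finite_GammaL[of n p], where f="\<lambda>a t. \<Sum>b\<in>?G. (c a * d b) * (ebf n p a t * ebf n p b t)"] I2 by blast
  also have "\<dots> = (\<Sum>a\<in>?G. \<Sum>b\<in>?G. LBINT t=0..2*pi. (c a * d b) * (ebf n p a t * ebf n p b t))"
  proof (intro sum.cong refl)
    fix a show "(LBINT t=0..2*pi. (\<Sum>b\<in>?G. (c a * d b) * (ebf n p a t * ebf n p b t))) = (\<Sum>b\<in>?G. LBINT t=0..2*pi. (c a * d b) * (ebf n p a t * ebf n p b t))"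
      using ili_sum[OF finite_GammaL[of n p], where f="\<lambda>b t. (c a * d b) * (ebf n p a t * ebf n p b t)"] I by blast
  qed
  also have "\<dots> = (\<Sum>a\<in>?G. \<Sum>b\<in>?G. (c a * d b) * (pi / 2 * ww a b))"
    by (intro sum.cong refl) (simp add: ebf_orth[OF n p op cp] ww_def)
  finally show ?thesis unfolding trig_inner_def Qf_def
    by (simp add: sum_distrib_left algebra_simps)
qed

lemma sum_prod_K: "(\<Sum>a\<in>S. A a) * (\<Sum>b\<in>S. B b) * (K::real) = (\<Sum>a\<in>S. \<Sum>b\<in>S. A a * B b * K)"
  by (simp only: sum_distrib_right sum_distrib_left) (rule sum.swap)

lemma cheb_inner_lc:
  shows "cheb_inner (lc n p c) (lc n p d) = Qf n p c d"
proof -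
  let ?G = "GammaL n p"
  let ?U = "\<lambda>a b x. cheb_T (fst a) x * cheb_T (fst b) x * (1 / sqrt (1 - x\<^sup>2))"
  let ?V = "\<lambda>a b y. cheb_T (snd a) y * cheb_T (snd b) y * (1 / sqrt (1 - y\<^sup>2))"
  have e: "lc n p c (x, y) * lc n p d (x, y) * (1 / (sqrt (1 - x\<^sup>2) * sqrt (1 - y\<^sup>2)))
      = (\<Sum>a\<in>?G. \<Sum>b\<in>?G. (c a * d b * ?U a b x) * ?V a b y)" for x y
  proof -
    have l: "lc n p c (x, y) = (\<Sum>a\<in>?G. c a * cheb_T (fst a) x * cheb_T (snd a) y)"
      "lc n p d (x, y) = (\<Sum>a\<in>?G. d a * cheb_T (fst a) x * cheb_T (snd a) y)"
      unfolding lc_def by (simp_all add: split_def)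
    have k: "1 / (sqrt (1 - x\<^sup>2) * sqrt (1 - y\<^sup>2)) = (1 / sqrt (1 - x\<^sup>2)) * (1 / sqrt (1 - y\<^sup>2))" by simp
    show ?thesis unfolding l k sum_prod_K
      by (intro sum.cong refl) (simp only: mult_ac)
  qed
  have IV: "interval_lebesgue_integrable lborel (-1) 1 (\<lambda>y. K * ?V a b y)" for K a b
    by (rule interval_lebesgue_integrable_mult_right) (rule J_lbint(1))
  have IV2: "interval_lebesgue_integrable lborel (-1) 1 (\<lambda>y. \<Sum>b\<in>?G. K b * ?V a b y)" for K a
    using ili_sum[OF finite_GammaL[of n p], where f="\<lambda>b y. K b * ?V a b y"] IV by blast
  have inner: "(LBINT y=-1..1. lc n p c (x, y) * lc n p d (x, y) * (1 / (sqrt (1 - x\<^sup>2) * sqrt (1 - y\<^sup>2))))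
     = (\<Sum>a\<in>?G. \<Sum>b\<in>?G. (c a * d b * (pi / 2 * wt (snd a) (snd b))) * ?U a b x)" for x
  proof -
    have "(LBINT y=-1..1. lc n p c (x, y) * lc n p d (x, y) * (1 / (sqrt (1 - x\<^sup>2) * sqrt (1 - y\<^sup>2))))
       = (\<Sum>a\<in>?G. LBINT y=-1..1. (\<Sum>b\<in>?G. (c a * d b * ?U a b x) * ?V a b y))"
    proof -
      have IV2': "interval_lebesgue_integrable lborel (-1) 1 (\<lambda>y. \<Sum>b\<in>?G. (c s * d b * ?U s b x) * ?V s b y)" for s
        by (rule IV2)
      show ?thesis unfolding e using ili_sum[OF finite_GammaL[of n p], where f="\<lambda>a y. \<Sum>b\<in>?G. (c a * d b * ?U a b x) * ?V a b y"] IV2' by blast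
    qed
    also have "\<dots> = (\<Sum>a\<in>?G. \<Sum>b\<in>?G. LBINT y=-1..1. (c a * d b * ?U a b x) * ?V a b y)"
    proof (intro sum.cong refl)
      fix a show "(LBINT y=-1..1. (\<Sum>b\<in>?G. (c a * d b * ?U a b x) * ?V a b y)) = (\<Sum>b\<in>?G. LBINT y=-1..1. (c a * d b * ?U a b x) * ?V a b y)"
        using ili_sum[OF finite_GammaL[of n p], where f="\<lambda>b y. (c a * d b * ?U a b x) * ?V a b y"] IV by blast
    qed
    also have "\<dots> = (\<Sum>a\<in>?G. \<Sum>b\<in>?G. (c a * d b * (pi / 2 * wt (snd a) (snd b))) * ?U a b x)" by (intro sum.cong refl) (simp only: interval_lebesgue_integral_mult_right J_lbint(2); simp only: mult_ac)
    finally show ?thesis .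
  qed
  have IU: "interval_lebesgue_integrable lborel (-1) 1 (\<lambda>x. K * ?U a b x)" for K a b
    by (rule interval_lebesgue_integrable_mult_right) (rule J_lbint(1))
  have IU2: "interval_lebesgue_integrable lborel (-1) 1 (\<lambda>x. \<Sum>b\<in>?G. K a b * ?U a b x)" for K a
    using ili_sum[OF finite_GammaL[of n p], where f="\<lambda>b x. K a b * ?U a b x"] IU by blast
  have "(LBINT x=-1..1. (LBINT y=-1..1. lc n p c (x, y) * lc n p d (x, y) * (1 / (sqrt (1 - x\<^sup>2) * sqrt (1 - y\<^sup>2)))))
     = (LBINT x=-1..1. (\<Sum>a\<in>?G. \<Sum>b\<in>?G. (c a * d b * (pi / 2 * wt (snd a) (snd b))) * ?U a b x))"
    unfolding inner ..
  also have "\<dots> = (\<Sum>a\<in>?G. LBINT x=-1..1. (\<Sum>b\<in>?G. (c a * d b * (pi / 2 * wt (snd a) (snd b))) * ?U a b x))"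
  proof -
    have IU2': "interval_lebesgue_integrable lborel (-1) 1 (\<lambda>x. \<Sum>b\<in>?G. (c s * d b * (pi / 2 * wt (snd s) (snd b))) * ?U s b x)" for s
      by (rule IU2)
    show ?thesis using ili_sum[OF finite_GammaL[of n p], where f="\<lambda>a x. \<Sum>b\<in>?G. (c a * d b * (pi / 2 * wt (snd a) (snd b))) * ?U a b x"] IU2' by blast
  qed
  also have "\<dots> = (\<Sum>a\<in>?G. \<Sum>b\<in>?G. LBINT x=-1..1. (c a * d b * (pi / 2 * wt (snd a) (snd b))) * ?U a b x)"
  proof (intro sum.cong refl)
    fix a show "(LBINT x=-1..1. (\<Sum>b\<in>?G. (c a * d b * (pi / 2 * wt (snd a) (snd b))) * ?U a b x)) = (\<Sum>b\<in>?G. LBINT x=-1..1. (c a * d b * (pi / 2 * wt (snd a) (snd b))) * ?U a b x)"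
      using ili_sum[OF finite_GammaL[of n p], where f="\<lambda>b x. (c a * d b * (pi / 2 * wt (snd a) (snd b))) * ?U a b x"] IU by blast
  qed
  also have "\<dots> = (\<Sum>a\<in>?G. \<Sum>b\<in>?G. (c a * d b * (pi / 2 * wt (snd a) (snd b))) * (pi / 2 * wt (fst a) (fst b)))"
    by (intro sum.cong refl) (simp only: interval_lebesgue_integral_mult_right J_lbint(2); simp only: mult_ac)
  finally show ?thesis unfolding cheb_inner_def Qf_def ww_def
    by (simp add: sum_distrib_left power2_eq_square algebra_simps)
qed

lemma ww_diag: "a \<noteq> b \<Longrightarrow> ww a b = 0" "ww a a \<ge> 1"
  unfolding ww_def wt_def by (auto simp: prod_eq_iff)

lemma Qf_diag: "Qf n p e e = (\<Sum>a\<in>GammaL n p. (e a)\<^sup>2 * ww a a / 4)"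
  unfolding Qf_def
proof (intro sum.cong refl)
  fix a assume a: "a \<in> GammaL n p"
  have "(\<Sum>b\<in>GammaL n p. e a * e b * ww a b / 4) = e a * e a * ww a a / 4"
  proof -
    have z: "(\<Sum>b\<in>GammaL n p - {a}. e a * e b * ww a b / 4) = 0"
    proof (rule sum.neutral, rule ballI)
      fix b assume "b \<in> GammaL n p - {a}"
      then have "a \<noteq> b" by auto
      then show "e a * e b * ww a b / 4 = 0" by (simp add: ww_diag(1))
    qed
    show ?thesis by (subst sum.remove[OF finite_GammaL a]) (simp add: z)
  qed
  then show "(\<Sum>b\<in>GammaL n p. e a * e b * ww a b / 4) = (e a)\<^sup>2 * ww a a / 4" by (simp add: power2_eq_square)
qed

lemma Qf_zero: assumes "Qf n p e e = 0" "a \<in> GammaL n p" shows "e a = 0"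
proof -
  have w0: "0 \<le> ww a a" for a using ww_diag(2)[of a] by linarith
  have nn: "\<And>a. a\<in>GammaL n p \<Longrightarrow> 0 \<le> (e a)\<^sup>2 * ww a a / 4" using w0 by (auto intro!: mult_nonneg_nonneg)
  have "(e a)\<^sup>2 * ww a a / 4 = 0" using assms Qf_diag sum_nonneg_eq_0_iff[OF finite_GammaL nn] by auto
  then show ?thesis using ww_diag(2)[of a] by auto
qed

lemma lc_diff: "lc n p (\<lambda>a. c a - d a) z = lc n p c z - lc n p d z"
  unfolding lc_def by (auto simp: split_def sum_subtractf[symmetric] algebra_simps intro!: sum.cong)

lemma lc_eq: "(\<And>a. a \<in> GammaL n p \<Longrightarrow> c a = d a) \<Longrightarrow> lc n p c = lc n p d"
  unfolding lc_def by (auto simp: split_def intro!: sum.cong)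

lemma E_inj:
  assumes n: "n>0" and p: "p>0" and op: "odd p" and cp: "coprime n (n+p)"
    and eq: "Egamma n p (lc n p c) = Egamma n p (lc n p d)"
  shows "lc n p c = lc n p d"
proof -
  let ?e = "\<lambda>a. c a - d a"
  have "Egamma n p (lc n p ?e) = (\<lambda>t. 0)"
    using eq unfolding Egamma_def lc_diff fun_eq_iff by simp
  then have "Qf n p ?e ?e = 0" using trig_inner_lc[OF n p op cp, of ?e ?e] by (simp add: trig_inner_def)
  then have "\<And>a. a \<in> GammaL n p \<Longrightarrow> c a = d a" using Qf_zero by fastforce
  then show ?thesis by (rule lc_eq)
qed


definition trigf :: "nat \<Rightarrow> (nat \<Rightarrow> real) \<Rightarrow> (nat \<Rightarrow> real) \<Rightarrow> real \<Rightarrow> real" where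
  "trigf N a b = (\<lambda>t. (\<Sum>m=0..N. a m * cos (real m * t)) + (\<Sum>m=1..N-1. b m * sin (real m * t)))"

lemma PiTrig_iff: "q \<in> PiTrig N \<longleftrightarrow> (\<exists>a b. q = trigf N a b)"
  unfolding PiTrig_def trigf_def by auto

lemma PiTrig_add: assumes "f \<in> PiTrig N" "g \<in> PiTrig N" shows "(\<lambda>t. f t + g t) \<in> PiTrig N"
proof -
  obtain a b a' b' where "f = trigf N a b" "g = trigf N a' b'" using assms PiTrig_iff by metis
  then have "(\<lambda>t. f t + g t) = trigf N (\<lambda>m. a m + a' m) (\<lambda>m. b m + b' m)"
    unfolding trigf_def by (auto simp: algebra_simps sum.distrib)
  then show ?thesis using PiTrig_iff by blast
qed

lemma PiTrig_scale: assumes "f \<in> PiTrig N" shows "(\<lambda>t. c * f t) \<in> PiTrig N"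
proof -
  obtain a b where "f = trigf N a b" using assms PiTrig_iff by metis
  then have "(\<lambda>t. c * f t) = trigf N (\<lambda>m. c * a m) (\<lambda>m. c * b m)"
    unfolding trigf_def by (auto simp: algebra_simps sum_distrib_left)
  then show ?thesis using PiTrig_iff by blast
qed

lemma PiTrig_zero: "(\<lambda>t. 0) \<in> PiTrig N"
proof -
  have "(\<lambda>t. 0) = trigf N (\<lambda>m. 0) (\<lambda>m. 0)" unfolding trigf_def by simp
  then show ?thesis using PiTrig_iff by blast
qed

lemma PiTrig_sum: assumes "finite S" "\<And>s. s \<in> S \<Longrightarrow> f s \<in> PiTrig N"
  shows "(\<lambda>t. \<Sum>s\<in>S. c s * f s t) \<in> PiTrig N"
  using assms
proof (induction S rule: finite_induct)
  case empty then show ?case using PiTrig_zero by simp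
next
  case (insert s S)
  have "(\<lambda>t. c s * f s t + (\<Sum>s\<in>S. c s * f s t)) \<in> PiTrig N"
    using insert by (intro PiTrig_add PiTrig_scale) auto
  then show ?case using insert by simp
qed

lemma PiTrig_mode_nat:
  assumes "m \<le> N" "m = N \<longrightarrow> sin \<alpha> = 0"
  shows "(\<lambda>t. cos (\<alpha> - real m * t)) \<in> PiTrig N"
proof -
  let ?a = "\<lambda>l. if l = m then cos \<alpha> else 0" and ?b = "\<lambda>l. if l = m then sin \<alpha> else 0"
  have "(\<lambda>t. cos (\<alpha> - real m * t)) = trigf N ?a ?b"
  proof
    fix t
    have s1: "(\<Sum>l=0..N. ?a l * cos (real l * t)) = cos \<alpha> * cos (real m * t)"
    proof -
      have "(\<Sum>l=0..N. ?a l * cos (real l * t)) = (\<Sum>l=0..N. if l = m then cos \<alpha> * cos (real m * t) else 0)"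
        by (intro sum.cong) auto
      also have "\<dots> = cos \<alpha> * cos (real m * t)" using assms(1) by simp
      finally show ?thesis .
    qed
    have s2: "(\<Sum>l=1..N-1. ?b l * sin (real l * t)) = sin \<alpha> * sin (real m * t)"
    proof -
      have "(\<Sum>l=1..N-1. ?b l * sin (real l * t)) = (\<Sum>l=1..N-1. if l = m then sin \<alpha> * sin (real m * t) else 0)"
        by (intro sum.cong) auto
      also have "\<dots> = sin \<alpha> * sin (real m * t)"
      proof (cases "m \<in> {1..N-1}")
        case True then show ?thesis by simp
      next
        case False
        then have "m = 0 \<or> m = N" using assms(1) by auto
        then show ?thesis using assms(2) by auto
      qed
      finally show ?thesis .
    qed
    show "cos (\<alpha> - real m * t) = trigf N ?a ?b t"
      unfolding trigf_def s1 s2 cos_diff ..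
  qed
  then show ?thesis using PiTrig_iff by blast
qed

lemma PiTrig_mode:
  fixes K :: int
  assumes "\<bar>K\<bar> \<le> int N" "\<bar>K\<bar> = int N \<longrightarrow> sin \<alpha> = 0"
  shows "(\<lambda>t. cos (\<alpha> - real_of_int K * t)) \<in> PiTrig N"
proof (cases "K \<ge> 0")
  case True
  then have e: "real_of_int K = real (nat K)" by simp
  have "(\<lambda>t. cos (\<alpha> - real (nat K) * t)) \<in> PiTrig N"
  proof (rule PiTrig_mode_nat)
    show "nat K \<le> N" using assms(1) True by linarith
    show "nat K = N \<longrightarrow> sin \<alpha> = 0"
    proof
      assume "nat K = N" then have "\<bar>K\<bar> = int N" using True by linarith
      then show "sin \<alpha> = 0" using assms(2) by blast
    qed
  qed
  then show ?thesis unfolding e .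
next
  case False
  then have e: "real_of_int K = - real (nat (-K))" by simp
  have "(\<lambda>t. cos ((-\<alpha>) - real (nat (-K)) * t)) \<in> PiTrig N"
  proof (rule PiTrig_mode_nat)
    show "nat (-K) \<le> N" using assms(1) False by linarith
    show "nat (-K) = N \<longrightarrow> sin (-\<alpha>) = 0"
    proof
      assume "nat (-K) = N" then have "\<bar>K\<bar> = int N" using False by linarith
      then show "sin (-\<alpha>) = 0" using assms(2) by simp
    qed
  qed
  moreover have "(\<lambda>t. cos ((-\<alpha>) - real (nat (-K)) * t)) = (\<lambda>t. cos (\<alpha> - real_of_int K * t))"
  proof
    fix t
    have "(-\<alpha>) - real (nat (-K)) * t = - (\<alpha> - (- real (nat (-K))) * t)" by (simp only: mult_minus_left diff_minus_eq_add minus_diff_eq minus_add_distrib) 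
    then show "cos ((-\<alpha>) - real (nat (-K)) * t) = cos (\<alpha> - real_of_int K * t)" unfolding e by (simp only: cos_minus)
  qed
  ultimately show ?thesis by (simp only:)
qed

lemma ebf_split:
  "ebf n p (i,j) t = (cos (real_of_int (int i - int j) * pi/2 - real_of_int (int i * int n - int j * int (n+p)) * t)
     + cos (real_of_int (int i + int j) * pi/2 - real_of_int (int i * int n + int j * int (n+p)) * t)) / 2"
proof -
  have a1: "real i * (pi/2 - real n * t) - real j * (pi/2 - real (n+p) * t)
     = real_of_int (int i - int j) * pi/2 - real_of_int (int i * int n - int j * int (n+p)) * t"
    by (simp add: field_simps)
  have a2: "real i * (pi/2 - real n * t) + real j * (pi/2 - real (n+p) * t)
     = real_of_int (int i + int j) * pi/2 - real_of_int (int i * int n + int j * int (n+p)) * t"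
    by (simp add: field_simps)
  show ?thesis unfolding ebf_def fst_conv snd_conv cos_times_cos a1 a2 ..
qed

lemma sin_int_half_pi_even: fixes m :: int shows "sin (real_of_int (2*m) * pi / 2) = 0"
proof -
  have "real_of_int (2*m) * pi / 2 = pi * real_of_int m" by simp
  then show ?thesis by (simp only: sin_npi_int)
qed

lemma ebf_PiTrig:
  assumes n: "n>0" and p: "p>0" and G: "a \<in> GammaL n p"
  shows "ebf n p a \<in> PiTrig (2*n*(n+p))"
proof -
  obtain i j where a: "a = (i,j)" by fastforce
  have G': "(i,j) \<in> GammaL n p" using G a by simp
  define N where "N = 2*n*(n+p)"
  note gb = Gamma_bound[OF n p G']
  have b1: "n*i + (n+p)*j \<le> N" using gb(1) by (simp add: N_def)
  have e: "int i * int n + int j * int (n+p) = int (n*i + (n+p)*j)" by (simp add: algebra_simps)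
  have nn: "int i * int n \<ge> 0" "int j * int (n+p) \<ge> 0" by simp_all
  have Npos: "N > 0" using n p by (simp add: N_def)
  have K1: "\<bar>int i * int n + int j * int (n+p)\<bar> \<le> int N"
    unfolding e by (simp only: abs_of_nat of_nat_le_iff b1)
  have K1e: "\<bar>int i * int n + int j * int (n+p)\<bar> = int N \<longrightarrow> sin (real_of_int (int i + int j) * pi/2) = 0"
  proof
    assume "\<bar>int i * int n + int j * int (n+p)\<bar> = int N"
    then have "n*i + (n+p)*j = N" unfolding e by (simp only: abs_of_nat of_nat_eq_iff)
    then have "i = 0 \<and> j = 2*n" using gb(2) by (simp add: N_def)
    then show "sin (real_of_int (int i + int j) * pi/2) = 0" using sin_int_half_pi_even[of "int n"] by simp
  qed
  have bb: "int i * int n + int j * int (n+p) \<le> int N" using K1 by simp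
  have K2: "\<bar>int i * int n - int j * int (n+p)\<bar> \<le> int N"
    unfolding abs_le_iff using bb nn by (intro conjI; linarith)
  have K2e: "\<bar>int i * int n - int j * int (n+p)\<bar> = int N \<longrightarrow> sin (real_of_int (int i - int j) * pi/2) = 0"
  proof
    assume H: "\<bar>int i * int n - int j * int (n+p)\<bar> = int N"
    show "sin (real_of_int (int i - int j) * pi/2) = 0"
    proof (cases "int i * int n - int j * int (n+p) \<ge> 0")
      case True
      then have h: "int i * int n - int j * int (n+p) = int N" using H by simp
      then have "int j * int (n+p) = 0" using bb nn by linarith
      then have "j = 0" using n by simp
      then have "int (n*i + (n+p)*j) = int N" using h e by simp
      then have "n*i + (n+p)*j = N" by (simp only: of_nat_eq_iff)
      then have "i = 0" using gb(2) by (simp add: N_def)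
      then have False using h \<open>j = 0\<close> Npos by simp
      then show ?thesis ..
    next
      case False
      then have h: "int j * int (n+p) - int i * int n = int N" using H by simp
      then have "int i * int n = 0" using bb nn by linarith
      then have "i = 0" using n by simp
      then have "int j * int (n+p) = int (2*n) * int (n+p)" using h by (simp add: N_def)
      then have "j = 2*n" using n by simp
      then show ?thesis using \<open>i = 0\<close> sin_int_half_pi_even[of "- int n"] by simp
    qed
  qed
  have A: "(\<lambda>t. cos (real_of_int (int i - int j) * pi/2 - real_of_int (int i * int n - int j * int (n+p)) * t)) \<in> PiTrig N"
    by (rule PiTrig_mode[OF K2 K2e])
  have B: "(\<lambda>t. cos (real_of_int (int i + int j) * pi/2 - real_of_int (int i * int n + int j * int (n+p)) * t)) \<in> PiTrig N"
    by (rule PiTrig_mode[OF K1 K1e])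
  have C: "(\<lambda>t. 1/2 * (cos (real_of_int (int i - int j) * pi/2 - real_of_int (int i * int n - int j * int (n+p)) * t)
     + cos (real_of_int (int i + int j) * pi/2 - real_of_int (int i * int n + int j * int (n+p)) * t))) \<in> PiTrig N"
    using PiTrig_scale[OF PiTrig_add[OF A B]] .
  have D: "ebf n p a = (\<lambda>t. 1/2 * (cos (real_of_int (int i - int j) * pi/2 - real_of_int (int i * int n - int j * int (n+p)) * t)
     + cos (real_of_int (int i + int j) * pi/2 - real_of_int (int i * int n + int j * int (n+p)) * t)))"
  proof
    fix t show "ebf n p a t = 1/2 * (cos (real_of_int (int i - int j) * pi/2 - real_of_int (int i * int n - int j * int (n+p)) * t)
     + cos (real_of_int (int i + int j) * pi/2 - real_of_int (int i * int n + int j * int (n+p)) * t))"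
      using a ebf_split[of n p i j t] by simp
  qed
  show ?thesis unfolding D using C by (simp only: N_def)
qed

lemma E_lc_fun: "Egamma n p (lc n p c) = (\<lambda>t. \<Sum>a\<in>GammaL n p. c a * ebf n p a t)"
  using E_lc by blast

lemma E_lc_PiTrig:
  assumes n: "n>0" and p: "p>0"
  shows "Egamma n p (lc n p c) \<in> PiTrig (2*n*(n+p))"
  unfolding E_lc_fun by (rule PiTrig_sum[OF finite_GammaL ebf_PiTrig[OF n p]])

lemma E_PiTrigL:
  assumes n: "n>0" and p: "p>0" and "P \<in> PiL n p"
  shows "Egamma n p P \<in> PiTrigL n p"
proof -
  obtain c where "P = lc n p c" using assms(3) PiL_iff by blast
  then show ?thesis using E_lc_PiTrig[OF n p]
    unfolding PiTrigL_def by (auto simp: Egamma_def)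
qed


lemma DS:
  fixes m :: int and N :: nat
  assumes N: "N > 0"
  shows "(\<Sum>k<2*N. cos (real_of_int m * (pi * real k / real N))) = (if (2 * int N) dvd m then 2 * real N else 0)"
    and "(\<Sum>k<2*N. sin (real_of_int m * (pi * real k / real N))) = 0"
proof -
  define z where "z = cis (real_of_int m * pi / real N)"
  have zk: "z ^ k = cis (real_of_int m * (pi * real k / real N))" for k
    unfolding z_def Complex.DeMoivre by (rule arg_cong[where f=cis]) (simp add: field_simps)
  have S: "(\<Sum>k<2*N. z ^ k) = (if (2 * int N) dvd m then of_nat (2*N) else 0)"
  proof (cases "(2 * int N) dvd m")
    case True
    then obtain l where l: "m = 2 * int N * l" by (auto elim: dvdE)
    have "z = cis (2 * pi * real_of_int l)" unfolding z_def l using N by (simp add: field_simps)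
    also have "\<dots> = 1" by (rule cis_multiple_2pi) simp
    finally show ?thesis using True by simp
  next
    case False
    have z1: "z \<noteq> 1"
    proof
      assume "z = 1"
      then have "cos (real_of_int m * pi / real N) = 1" unfolding z_def by (metis cis.simps(1) one_complex.simps(1))
      then obtain j :: int where j: "real_of_int m * pi / real N = real_of_int j * 2 * pi" using cos_one_2pi_int by blast
      then have "real_of_int m = real_of_int (2 * int N * j)" using N by (simp add: field_simps)
      then have "m = 2 * int N * j" by (simp only: of_int_eq_iff)
      then show False using False by simp
    qed
    have "z ^ (2*N) = cis (real_of_int m * (pi * real (2*N) / real N))" by (rule zk)
    also have "\<dots> = cis (2 * pi * real_of_int m)" using N by (simp add: field_simps)
    also have "\<dots> = 1" by (rule cis_multiple_2pi) simp
    finally have "z ^ (2*N) = 1" .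
    then show ?thesis using False z1 by (simp add: sum_gp_strict)
  qed
  have "(\<Sum>k<2*N. cos (real_of_int m * (pi * real k / real N))) = Re (\<Sum>k<2*N. z ^ k)"
    unfolding zk by simp
  then show "(\<Sum>k<2*N. cos (real_of_int m * (pi * real k / real N))) = (if (2 * int N) dvd m then 2 * real N else 0)"
    unfolding S by simp
  have "(\<Sum>k<2*N. sin (real_of_int m * (pi * real k / real N))) = Im (\<Sum>k<2*N. z ^ k)"
    unfolding zk by simp
  then show "(\<Sum>k<2*N. sin (real_of_int m * (pi * real k / real N))) = 0"
    unfolding S by simp
qed

definition dd :: "nat \<Rightarrow> int \<Rightarrow> real" where "dd N m = (if (2 * int N) dvd m then 1 else 0)"

lemma DS_prods:
  fixes m l N :: nat
  assumes N: "N > 0"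
  defines "s \<equiv> \<lambda>k. pi * real k / real N"
  shows "(\<Sum>k<2*N. cos (real m * s k) * cos (real l * s k)) = real N * (dd N (int m - int l) + dd N (int m + int l))"
    and "(\<Sum>k<2*N. sin (real m * s k) * cos (real l * s k)) = 0"
    and "(\<Sum>k<2*N. cos (real m * s k) * sin (real l * s k)) = 0"
    and "(\<Sum>k<2*N. sin (real m * s k) * sin (real l * s k)) = real N * (dd N (int m - int l) - dd N (int m + int l))"
proof -
  have a1: "real m * s k - real l * s k = real_of_int (int m - int l) * s k" for k
    by (simp only: of_int_diff of_int_of_nat_eq left_diff_distrib)
  have a2: "real m * s k + real l * s k = real_of_int (int m + int l) * s k" for k
    by (simp only: of_int_add of_int_of_nat_eq distrib_right)
  have a3: "real l * s k - real m * s k = real_of_int (int l - int m) * s k" for k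
    by (simp only: of_int_diff of_int_of_nat_eq left_diff_distrib)
  have a4: "real m * s k + real l * s k = real_of_int (int l + int m) * s k" for k
    by (simp only: of_int_add of_int_of_nat_eq distrib_right add.commute)
  have D1: "(\<Sum>k<2*N. cos (real_of_int j * s k)) = (if (2 * int N) dvd j then 2 * real N else 0)" for j
    using DS(1)[OF N, of j] by (simp add: s_def)
  have D2: "(\<Sum>k<2*N. sin (real_of_int j * s k)) = 0" for j
    using DS(2)[OF N, of j] by (simp add: s_def)
  note D = D1 D2
  have ddm: "dd N (int l - int m) = dd N (int m - int l)" unfolding dd_def
    by (metis dvd_diff_commute)
  show "(\<Sum>k<2*N. cos (real m * s k) * cos (real l * s k)) = real N * (dd N (int m - int l) + dd N (int m + int l))"
    unfolding cos_times_cos a1 a2 sum_divide_distrib[symmetric] sum.distrib D dd_def by simp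
  show "(\<Sum>k<2*N. sin (real m * s k) * cos (real l * s k)) = 0"
    unfolding sin_times_cos a1 a2 sum_divide_distrib[symmetric] sum.distrib D by simp
  show "(\<Sum>k<2*N. cos (real m * s k) * sin (real l * s k)) = 0"
    unfolding cos_times_sin a1 a2 sum_divide_distrib[symmetric] sum_subtractf D by simp
  show "(\<Sum>k<2*N. sin (real m * s k) * sin (real l * s k)) = real N * (dd N (int m - int l) - dd N (int m + int l))"
    unfolding sin_times_sin a1 a2 sum_divide_distrib[symmetric] sum_subtractf D dd_def by simp
qed

lemma dd_diff: assumes "m \<le> N" "l \<le> N" "N > 0" shows "dd N (int m - int l) = (if m = l then 1 else 0)"
proof -
  have "(2 * int N) dvd (int m - int l) \<longleftrightarrow> m = l"
  proof
    assume d: "(2 * int N) dvd (int m - int l)"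
    show "m = l"
    proof (rule ccontr)
      assume "m \<noteq> l"
      then have "int m - int l \<noteq> 0" by simp
      from dvd_imp_le_int[OF this d] have "\<bar>2 * int N\<bar> \<le> \<bar>int m - int l\<bar>" .
      then show False using assms by linarith
    qed
  qed simp
  then show ?thesis unfolding dd_def by simp
qed

lemma dd_sum: assumes "m \<le> N" "l \<le> N" "N > 0"
  shows "dd N (int m + int l) = (if m + l = 0 \<or> m + l = 2*N then 1 else 0)"
proof -
  have "(2 * int N) dvd (int m + int l) \<longleftrightarrow> m + l = 0 \<or> m + l = 2*N"
  proof
    assume d: "(2 * int N) dvd (int m + int l)"
    then obtain c where c: "int m + int l = 2 * int N * c" by (auto elim: dvdE)
    have "c \<ge> 0"
    proof (rule ccontr)
      assume "\<not> c \<ge> 0" then have "2 * int N * c < 0" using assms by (simp add: mult_pos_neg)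
      then show False using c by linarith
    qed
    moreover have "c \<le> 1"
    proof (rule ccontr)
      assume "\<not> c \<le> 1" then have "c \<ge> 2" by simp
      then have "2 * int N * c \<ge> 2 * int N * 2" using assms by (intro mult_left_mono) auto
      then show False using c assms by linarith
    qed
    ultimately have "c = 0 \<or> c = 1" by linarith
    then show "m + l = 0 \<or> m + l = 2*N" using c by auto
  next
    assume "m + l = 0 \<or> m + l = 2*N"
    then show "(2 * int N) dvd (int m + int l)"
    proof
      assume "m + l = 2*N" then have "int m + int l = 2 * int N * 1" by linarith
      then show ?thesis by (metis dvd_triv_left)
    qed simp
  qed
  then show ?thesis unfolding dd_def by simp
qed

lemma unisolv:
  assumes N: "N > 0" and Z: "\<And>k. k < 2*N \<Longrightarrow> trigf N a b (pi * real k / real N) = 0"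
  shows "trigf N a b = (\<lambda>t. 0)"
proof -
  define s where "s = (\<lambda>k::nat. pi * real k / real N)"
  have P1: "(\<Sum>k<2*N. cos (real m * s k) * cos (real l * s k)) = real N * (dd N (int m - int l) + dd N (int m + int l))" for m l
    using DS_prods(1)[OF N, of m l] by (simp add: s_def)
  have P2: "(\<Sum>k<2*N. sin (real m * s k) * cos (real l * s k)) = 0" for m l
    using DS_prods(2)[OF N, of m l] by (simp add: s_def)
  have P3: "(\<Sum>k<2*N. cos (real m * s k) * sin (real l * s k)) = 0" for m l
    using DS_prods(3)[OF N, of m l] by (simp add: s_def)
  have P4: "(\<Sum>k<2*N. sin (real m * s k) * sin (real l * s k)) = real N * (dd N (int m - int l) - dd N (int m + int l))" for m l
    using DS_prods(4)[OF N, of m l] by (simp add: s_def)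
  note P = P1 P2 P3 P4
  have A: "a l = 0" if l: "l \<le> N" for l
  proof -
    have "0 = (\<Sum>k<2*N. trigf N a b (s k) * cos (real l * s k))"
      using Z by (simp add: s_def)
    also have "\<dots> = (\<Sum>k<2*N. (\<Sum>m=0..N. a m * (cos (real m * s k) * cos (real l * s k))) +
                              (\<Sum>m=1..N-1. b m * (sin (real m * s k) * cos (real l * s k))))"
      unfolding trigf_def by (intro sum.cong refl) (simp add: distrib_right sum_distrib_right distrib_left sum_distrib_left mult_ac)
    also have "\<dots> = (\<Sum>m=0..N. a m * (\<Sum>k<2*N. cos (real m * s k) * cos (real l * s k))) +
                     (\<Sum>m=1..N-1. b m * (\<Sum>k<2*N. sin (real m * s k) * cos (real l * s k)))"
      by (simp add: sum.distrib sum_distrib_left sum.swap[of _ "{..<2*N}"])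
    also have "\<dots> = (\<Sum>m=0..N. a m * (real N * (dd N (int m - int l) + dd N (int m + int l))))"
      by (simp only: P mult_zero_right sum.neutral_const add_0_right add_0_left)
    also have "\<dots> = a l * (real N * (1 + dd N (int l + int l)))"
    proof -
      have "(\<Sum>m=0..N. a m * (real N * (dd N (int m - int l) + dd N (int m + int l)))) =
            (\<Sum>m=0..N. if m = l then a l * (real N * (1 + dd N (int l + int l))) else 0)"
      proof (intro sum.cong refl)
        fix m assume "m \<in> {0..N}"
        then have m: "m \<le> N" by simp
        show "a m * (real N * (dd N (int m - int l) + dd N (int m + int l))) = (if m = l then a l * (real N * (1 + dd N (int l + int l))) else 0)"
          using dd_diff[OF m l N] dd_sum[OF m l N] m l by auto
      qed
      then show ?thesis using l by simp
    qed
    finally have "a l * (real N * (1 + dd N (int l + int l))) = 0" by simp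
    moreover have "real N * (1 + dd N (int l + int l)) > 0" using N by (simp add: dd_def)
    ultimately show "a l = 0" by (metis less_irrefl mult_eq_0_iff)
  qed
  have B: "b l = 0" if l: "1 \<le> l" "l \<le> N - 1" for l
  proof -
    have lN: "l \<le> N" using l by simp
    have "0 = (\<Sum>k<2*N. trigf N a b (s k) * sin (real l * s k))"
      using Z by (simp add: s_def)
    also have "\<dots> = (\<Sum>k<2*N. (\<Sum>m=0..N. a m * (cos (real m * s k) * sin (real l * s k))) +
                              (\<Sum>m=1..N-1. b m * (sin (real m * s k) * sin (real l * s k))))"
      unfolding trigf_def by (intro sum.cong refl) (simp add: distrib_right sum_distrib_right distrib_left sum_distrib_left mult_ac)
    also have "\<dots> = (\<Sum>m=0..N. a m * (\<Sum>k<2*N. cos (real m * s k) * sin (real l * s k))) +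
                     (\<Sum>m=1..N-1. b m * (\<Sum>k<2*N. sin (real m * s k) * sin (real l * s k)))"
      by (simp add: sum.distrib sum_distrib_left sum.swap[of _ "{..<2*N}"])
    also have "\<dots> = (\<Sum>m=1..N-1. b m * (real N * (dd N (int m - int l) - dd N (int m + int l))))"
      by (simp only: P mult_zero_right sum.neutral_const add_0_right add_0_left)
    also have "\<dots> = b l * real N"
    proof -
      have "(\<Sum>m=1..N-1. b m * (real N * (dd N (int m - int l) - dd N (int m + int l)))) =
            (\<Sum>m=1..N-1. if m = l then b l * real N else 0)"
      proof (intro sum.cong refl)
        fix m assume "m \<in> {1..N-1}"
        then have m: "m \<le> N" "1 \<le> m" "m \<le> N - 1" by auto
        have "m + l \<noteq> 0" "m + l \<noteq> 2*N" using m l by auto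
        then show "b m * (real N * (dd N (int m - int l) - dd N (int m + int l))) = (if m = l then b l * real N else 0)"
          using dd_diff[OF m(1) lN N] dd_sum[OF m(1) lN N] by auto
      qed
      then show ?thesis using l by simp
    qed
    finally show "b l = 0" using N by simp
  qed
  show ?thesis unfolding trigf_def using A B by (auto intro!: sum.neutral ext)
qed


lemma rows_sum: "(\<Sum>j\<le>2*n. (if even j then (q::nat) else q+1)) = (2*n+1)*q + n"
proof (induction n)
  case 0 then show ?case by simp
next
  case (Suc n)
  have "{..2 * Suc n} = insert (2*n+2) (insert (2*n+1) {..2*n})" by auto
  then have "(\<Sum>j\<le>2*Suc n. (if even j then q else q+1)) = q + (q + 1) + (\<Sum>j\<le>2*n. (if even j then q else q+1))"
    by simp
  then show ?case using Suc by simp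
qed

lemma card_row: "card {i. i \<le> 2*q \<and> odd (i + j)} = (if even j then q else q+1)"
proof (cases "even j")
  case True
  have "{i. i \<le> 2*q \<and> odd (i + j)} = (\<lambda>l. 2*l+1) ` {..<q}"
  proof (intro set_eqI iffI)
    fix i assume "i \<in> {i. i \<le> 2*q \<and> odd (i + j)}"
    then have "i \<le> 2*q" "odd i" using True by auto
    then obtain l where "i = 2*l+1" by (metis oddE)
    then show "i \<in> (\<lambda>l. 2*l+1) ` {..<q}" using \<open>i \<le> 2*q\<close> by auto
  qed (use True in auto)
  moreover have "inj_on (\<lambda>l::nat. 2*l+1) {..<q}" by (auto simp: inj_on_def)
  ultimately show ?thesis using True by (simp add: card_image)
next
  case False
  have "{i. i \<le> 2*q \<and> odd (i + j)} = (\<lambda>l. 2*l) ` {..q}"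
  proof (intro set_eqI iffI)
    fix i assume "i \<in> {i. i \<le> 2*q \<and> odd (i + j)}"
    then have "i \<le> 2*q" "even i" using False by auto
    then obtain l where "i = 2*l" by (metis evenE)
    then show "i \<in> (\<lambda>l. 2*l) ` {..q}" using \<open>i \<le> 2*q\<close> by auto
  qed (use False in auto)
  moreover have "inj_on (\<lambda>l::nat. 2*l) {..q}" by (auto simp: inj_on_def)
  ultimately show ?thesis using False by (simp add: card_image)
qed

definition Dp :: "nat \<Rightarrow> nat \<Rightarrow> (nat \<times> nat) set" where
  "Dp n q = (SIGMA j:{..2*n}. {i. i \<le> 2*q \<and> odd (i + j)})"

lemma finite_Dp: "finite (Dp n q)"
proof -
  have "Dp n q \<subseteq> {..2*n} \<times> {..2*q}" unfolding Dp_def by auto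
  then show ?thesis by (rule finite_subset) auto
qed

lemma card_Dp: "card (Dp n q) = (2*n+1)*q + n"
proof -
  have "card (Dp n q) = (\<Sum>j\<le>2*n. card {i. i \<le> 2*q \<and> odd (i + j)})"
    unfolding Dp_def by (rule card_SigmaI) auto
  also have "\<dots> = (\<Sum>j\<le>2*n. (if even j then q else q+1))" by (simp only: card_row)
  finally show ?thesis by (simp only: rows_sum)
qed

lemma count_T:
  fixes n q :: nat
  assumes n: "n > 0" and q: "q > 0" and cp: "coprime n q"
  defines "T \<equiv> {(i,j). n*i + q*j < 2*n*q}"
  shows "2 * card T + 3 = (2*q+1)*(2*n+1)"
proof -
  let ?R = "{..2*q} \<times> {..2*n}"
  define T' where "T' = {(i,j). (i,j) \<in> ?R \<and> n*i + q*j > 2*n*q}"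
  define Ls where "Ls = {(i,j). (i,j) \<in> ?R \<and> n*i + q*j = 2*n*q}"
  have TR: "T \<subseteq> ?R"
  proof
    fix x assume "x \<in> T"
    then obtain i j where x: "x = (i,j)" and h: "n*i + q*j < 2*n*q" unfolding T_def by auto
    have "n*i < n*(2*q)"
    proof -
      have "2*n*q = n*(2*q)" "n*i \<le> n*i + q*j" by simp_all
      then show ?thesis using h by linarith
    qed
    then have "i < 2*q" using n by simp
    moreover have "q*j < q*(2*n)"
    proof -
      have "2*n*q = q*(2*n)" "q*j \<le> n*i + q*j" by simp_all
      then show ?thesis using h by linarith
    qed
    then have "j < 2*n" using q by simp
    ultimately show "x \<in> ?R" using x by auto
  qed
  have R: "?R = T \<union> T' \<union> Ls" using TR unfolding T_def T'_def Ls_def by auto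
  have fR: "finite ?R" by simp
  have cR: "card ?R = card T + card T' + card Ls"
  proof -
    have f1: "finite T" using TR finite_subset fR by blast
    have f2: "finite T'" by (rule finite_subset[OF _ fR]) (auto simp: T'_def)
    have f3: "finite Ls" by (rule finite_subset[OF _ fR]) (auto simp: Ls_def)
    have "card (T \<union> T' \<union> Ls) = card (T \<union> T') + card Ls"
      by (rule card_Un_disjoint) (use f1 f2 f3 in \<open>auto simp: T_def T'_def Ls_def\<close>)
    also have "card (T \<union> T') = card T + card T'"
      by (rule card_Un_disjoint) (use f1 f2 in \<open>auto simp: T_def T'_def Ls_def\<close>)
    finally show ?thesis by (subst R) simp
  qed
  define \<rho> where "\<rho> = (\<lambda>(i::nat,j::nat). (2*q - i, 2*n - j))"
  have rho_val: "n*(2*q - i) + q*(2*n - j) + (n*i + q*j) = 4*n*q" if "i \<le> 2*q" "j \<le> 2*n" for i j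
  proof -
    have "n*(2*q - i) + n*i = n*(2*q)" using that by (simp add: diff_mult_distrib2)
    moreover have "q*(2*n - j) + q*j = q*(2*n)" using that by (simp add: diff_mult_distrib2)
    ultimately show ?thesis by (simp add: algebra_simps)
  qed
  have rho_inv: "\<rho> (\<rho> x) = x" if "x \<in> ?R" for x using that unfolding \<rho>_def by auto
  have rhoT: "\<rho> ` T = T'"
  proof (intro set_eqI iffI)
    fix y assume "y \<in> \<rho> ` T"
    then obtain i j where ij: "(i,j) \<in> T" "y = \<rho> (i,j)" by auto
    then have b: "i \<le> 2*q" "j \<le> 2*n" using TR by auto
    have "n*i + q*j < 2*n*q" using ij unfolding T_def by auto
    then show "y \<in> T'" using ij(2) rho_val[OF b] b unfolding \<rho>_def T'_def by auto
  next
    fix y assume y: "y \<in> T'"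
    then obtain i j where ij: "y = (i,j)" "i \<le> 2*q" "j \<le> 2*n" "n*i + q*j > 2*n*q" by (auto simp: T'_def)
    have "\<rho> y \<in> T" using rho_val[OF ij(2,3)] ij unfolding \<rho>_def T_def by auto
    moreover have "\<rho> (\<rho> y) = y" using rho_inv ij by auto
    ultimately show "y \<in> \<rho> ` T" by (metis image_eqI)
  qed
  have "inj_on \<rho> T" by (metis inj_on_inverseI rho_inv TR subsetD)
  then have cT': "card T' = card T" using rhoT card_image by metis
  have L: "Ls = {(0, 2*n), (q, n), (2*q, 0)}"
  proof (intro set_eqI iffI)
    fix x assume "x \<in> Ls"
    then obtain i j where x: "x = (i,j)" and b: "i \<le> 2*q" "j \<le> 2*n" and e: "n*i + q*j = 2*n*q" by (auto simp: Ls_def)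
    have d1: "n dvd n*i + q*j" unfolding e by simp
    have "n dvd q*j" using d1 by (simp add: dvd_add_right_iff)
    then have "n dvd j" using cp by (simp add: coprime_dvd_mult_right_iff)
    then obtain c where c: "j = n*c" by (auto elim: dvdE)
    have "n*c \<le> n*2" using b(2) c by simp
    then have "c \<le> 2" using n by simp
    then have "c = 0 \<or> c = 1 \<or> c = 2" by auto
    then show "x \<in> {(0, 2*n), (q, n), (2*q, 0)}"
    proof (elim disjE)
      assume c0: "c = 0"
      then have "n*i = n*(2*q)" using e c by (simp add: mult.assoc mult.left_commute)
      then have "i = 2*q" using n by simp
      then show ?thesis using c0 c x by simp
    next
      assume c1: "c = 1"
      then have "n*i + q*n = n*q + q*n" using e c by (simp add: mult.commute)
      then have "n*i = n*q" by simp
      then have "i = q" using n by simp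
      then show ?thesis using c1 c x by simp
    next
      assume c2: "c = 2"
      then have "n*i + q*(2*n) = 0 + q*(2*n)" using e c by (simp add: mult.commute mult.left_commute)
      then have "n*i = 0" by simp
      then have "i = 0" using n by simp
      then show ?thesis using c2 c x by simp
    qed
  next
    fix x assume "x \<in> {(0, 2*n), (q, n), (2*q, 0)}"
    moreover have "(0, 2*n) \<in> Ls" unfolding Ls_def by (simp add: mult.commute mult.left_commute)
    moreover have "(q, n) \<in> Ls" unfolding Ls_def by (simp add: mult.commute mult.left_commute)
    moreover have "(2*q, 0) \<in> Ls" unfolding Ls_def by (simp add: mult.commute mult.left_commute)
    ultimately show "x \<in> Ls" by blast
  qed
  have cL: "card Ls = 3" unfolding L using n q by auto
  have "card ?R = (2*q+1)*(2*n+1)" by simp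
  then show ?thesis using cR cT' cL by simp
qed

lemma card_Dp_le_Gamma:
  assumes n: "n > 0" and p: "p > 0" and cp: "coprime n (n+p)"
  shows "card (Dp n (n+p)) \<le> card (GammaL n p)"
proof -
  define q where "q = n + p"
  have q: "q > 0" using n by (simp add: q_def)
  define T where "T = {(i,j). n*i + q*j < 2*n*q}"
  have cpq: "coprime n q" using cp by (simp add: q_def)
  have cT: "2 * card T + 3 = (2*q+1)*(2*n+1)" unfolding T_def by (rule count_T[OF n q cpq])
  have cD: "card (Dp n q) = (2*n+1)*q + n" by (rule card_Dp)
  have "2 * card (Dp n q) = 2 * (card T + 1)" using cT cD by (simp add: algebra_simps)
  then have cDT: "card (Dp n q) = card T + 1" by simp
  have sub: "insert (0, 2*n) T \<subseteq> GammaL n p"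
    unfolding T_def q_def using GammaL_iff[OF n p] by auto
  have nin: "(0, 2*n) \<notin> T" unfolding T_def by auto
  have fT: "finite T"
  proof -
    have "T \<subseteq> {..2*q} \<times> {..2*n}" unfolding T_def
    proof
      fix x assume "x \<in> {(i, j). n * i + q * j < 2 * n * q}"
      then obtain i j where x: "x = (i,j)" and h: "n*i + q*j < 2*n*q" by auto
      have "n*i < n*(2*q)"
    proof -
      have "2*n*q = n*(2*q)" "n*i \<le> n*i + q*j" by simp_all
      then show ?thesis using h by linarith
    qed
      then have "i < 2*q" using n by simp
      moreover have "q*j < q*(2*n)"
    proof -
      have "2*n*q = q*(2*n)" "q*j \<le> n*i + q*j" by simp_all
      then show ?thesis using h by linarith
    qed
      then have "j < 2*n" using q by simp
      ultimately show "x \<in> {..2*q} \<times> {..2*n}" using x by auto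
    qed
    then show ?thesis by (rule finite_subset) auto
  qed
  have "card (insert (0, 2*n) T) \<le> card (GammaL n p)" by (rule card_mono[OF finite_GammaL sub])
  then show ?thesis using cDT nin fT q_def by simp
qed


lemma cos_fold:
  fixes z :: int and M :: nat
  assumes M: "M > 0"
  shows "\<exists>i::nat. i \<le> 2*M \<and> even (int i - z) \<and> cos (pi * real_of_int z / (2 * real M)) = cos (pi * real i / (2 * real M))"
proof -
  define r where "r = z mod (4 * int M)"
  define d where "d = z div (4 * int M)"
  have zr: "z = 4 * int M * d + r" unfolding r_def d_def by simp
  have r0: "0 \<le> r" "r < 4 * int M" using M unfolding r_def by simp_all
  have c1: "cos (pi * real_of_int z / (2 * real M)) = cos (pi * real_of_int r / (2 * real M))"
  proof -
    have "pi * real_of_int z / (2 * real M) = pi * real_of_int r / (2 * real M) + 2 * pi * real_of_int d"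
      unfolding zr using M by (simp add: field_simps)
    then show ?thesis by (simp only: cos_add cos_int_2pin sin_int_2pin mult_1_right mult_zero_right diff_zero)
  qed
  have er: "even (r - z)" unfolding zr by simp
  show ?thesis
  proof (cases "r \<le> 2 * int M")
    case True
    show ?thesis
    proof (intro exI conjI)
      show "nat r \<le> 2*M" using True by linarith
      show "even (int (nat r) - z)" using er r0 by simp
      show "cos (pi * real_of_int z / (2 * real M)) = cos (pi * real (nat r) / (2 * real M))"
        using c1 r0 by simp
    qed
  next
    case False
    show ?thesis
    proof (intro exI conjI)
      show "nat (4 * int M - r) \<le> 2*M" using False by linarith
      have nn: "4 * int M - r \<ge> 0" using r0 by simp
      have "int (nat (4 * int M - r)) - z = 2*(2*int M - z) - (r - z)" using nn by simp
      then show "even (int (nat (4 * int M - r)) - z)" using er by simp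
      have "real (nat (4 * int M - r)) = 4 * real M - real_of_int r" using r0 by simp
      then have "pi * real (nat (4 * int M - r)) / (2 * real M) = 2 * pi - pi * real_of_int r / (2 * real M)"
        using M by (simp add: field_simps)
      then show "cos (pi * real_of_int z / (2 * real M)) = cos (pi * real (nat (4 * int M - r)) / (2 * real M))"
        unfolding c1 by (simp add: cos_diff)
    qed
  qed
qed

definition phi :: "nat \<Rightarrow> nat \<Rightarrow> nat \<times> nat \<Rightarrow> real \<times> real" where
  "phi n q = (\<lambda>(j,i). (cos (pi * real i / (2 * real q)), cos (pi * real j / (2 * real n))))"

lemma lis_in_phi:
  assumes n: "n > 0" and p: "p > 0" and op: "odd p"
  shows "lissajous n p (tpt n p (int k)) \<in> phi n (n+p) ` Dp n (n+p)"
proof -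
  define q where "q = n + p"
  have q: "q > 0" using n by (simp add: q_def)
  have s1: "sin (real n * tpt n p (int k)) = cos (pi * real_of_int (int q - int k) / (2 * real q))"
  proof -
    have "real n * tpt n p (int k) = pi / 2 - pi * real_of_int (int q - int k) / (2 * real q)"
      unfolding tpt_def q_def[symmetric] using n q by (simp add: field_simps)
    then show ?thesis by (simp add: sin_cos_eq)
  qed
  have s2: "sin (real (n+p) * tpt n p (int k)) = cos (pi * real_of_int (int n - int k) / (2 * real n))"
  proof -
    have "real (n+p) * tpt n p (int k) = pi / 2 - pi * real_of_int (int n - int k) / (2 * real n)"
      unfolding tpt_def q_def[symmetric] using n q by (simp add: field_simps)
    then show ?thesis by (simp add: sin_cos_eq)
  qed
  obtain i where i: "i \<le> 2*q" "even (int i - (int q - int k))" "cos (pi * real_of_int (int q - int k) / (2 * real q)) = cos (pi * real i / (2 * real q))"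
    using cos_fold[OF q] by blast
  obtain j where j: "j \<le> 2*n" "even (int j - (int n - int k))" "cos (pi * real_of_int (int n - int k) / (2 * real n)) = cos (pi * real j / (2 * real n))"
    using cos_fold[OF n] by blast
  obtain a where a: "int i - (int q - int k) = 2*a" using i(2) evenE by blast
  obtain b where b: "int j - (int n - int k) = 2*b" using j(2) evenE by blast
  have e: "int i + int j = 2*(a + b - int k + int n) + int p" using a b unfolding q_def of_nat_add by algebra
  have "odd (2*(a + b - int k + int n) + int p)" using op by simp
  then have "odd (int i + int j)" unfolding e .
  then have "odd (i + j)" by simp
  then have "(j,i) \<in> Dp n q" unfolding Dp_def using i(1) j(1) by simp
  moreover have "lissajous n p (tpt n p (int k)) = phi n q (j,i)"
    unfolding lissajous_def phi_def using s1 s2 i(3) j(3) by (simp add: q_def)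
  ultimately show ?thesis unfolding q_def by blast
qed

definition Xs :: "nat \<Rightarrow> nat \<Rightarrow> (real \<times> real) set" where
  "Xs n p = (\<lambda>k. lissajous n p (tpt n p (int k))) ` {..<2*(2*n*(n+p))}"

lemma finite_Xs: "finite (Xs n p)" unfolding Xs_def by simp

lemma card_Xs:
  assumes n: "n > 0" and p: "p > 0" and op: "odd p" and cp: "coprime n (n+p)"
  shows "card (Xs n p) \<le> card (GammaL n p)"
proof -
  have "Xs n p \<subseteq> phi n (n+p) ` Dp n (n+p)" unfolding Xs_def using lis_in_phi[OF n p op] by auto
  then have "card (Xs n p) \<le> card (phi n (n+p) ` Dp n (n+p))" by (intro card_mono finite_imageI finite_Dp)
  also have "\<dots> \<le> card (Dp n (n+p))" by (rule card_image_le[OF finite_Dp])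
  also have "\<dots> \<le> card (GammaL n p)" by (rule card_Dp_le_Gamma[OF n p cp])
  finally show ?thesis .
qed


interpretation GV: vector_space "\<lambda>(c::real) (f::nat \<Rightarrow> real). (\<lambda>k. c * f k)"
  by unfold_locales (simp_all add: fun_eq_iff algebra_simps)

lemma fsum_apply: "(\<Sum>v\<in>S. (g v :: nat \<Rightarrow> real)) k = (\<Sum>v\<in>S. g v k)"
  by (induction S rule: infinite_finite_induct) auto

definition NN :: "nat \<Rightarrow> nat \<Rightarrow> nat" where "NN n p = 2*n*(n+p)"

definition gv :: "nat \<Rightarrow> nat \<Rightarrow> (real \<Rightarrow> real) \<Rightarrow> nat \<Rightarrow> real" where
  "gv n p f = (\<lambda>k. if k < 2 * NN n p then f (tpt n p (int k)) else 0)"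

definition ind :: "nat \<Rightarrow> nat \<Rightarrow> real \<times> real \<Rightarrow> nat \<Rightarrow> real" where
  "ind n p x = (\<lambda>k. if k < 2 * NN n p \<and> lissajous n p (tpt n p (int k)) = x then 1 else 0)"

lemma tpt_eq: assumes "n > 0" shows "tpt n p (int k) = pi * real k / real (NN n p)"
proof -
  have d: "4 * real n * real (n + p) = 2 * real (2*n*(n+p))" by simp
  have "2 * pi * real_of_int (int k) / (4 * real n * real (n + p)) = (2 * (pi * real k)) / (2 * real (2*n*(n+p)))"
    unfolding d by simp
  also have "\<dots> = pi * real k / real (2*n*(n+p))" by (rule mult_divide_mult_cancel_left) simp
  finally show ?thesis unfolding tpt_def NN_def .
qed

lemma span_ind:
  assumes H: "\<And>k k'. k < 2 * NN n p \<Longrightarrow> k' < 2 * NN n p \<Longrightarrow>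
      lissajous n p (tpt n p (int k)) = lissajous n p (tpt n p (int k')) \<Longrightarrow> f (tpt n p (int k)) = f (tpt n p (int k'))"
  shows "gv n p f \<in> GV.span (ind n p ` Xs n p)"
proof -
  define K where "K x = (SOME k. k < 2 * NN n p \<and> lissajous n p (tpt n p (int k)) = x)" for x
  define g where "g x = f (tpt n p (int (K x)))" for x
  have Xs': "Xs n p = (\<lambda>k. lissajous n p (tpt n p (int k))) ` {..<2 * NN n p}" unfolding Xs_def NN_def ..
  have Kp: "K x < 2 * NN n p \<and> lissajous n p (tpt n p (int (K x))) = x" if "x \<in> Xs n p" for x
  proof -
    have "x \<in> (\<lambda>k. lissajous n p (tpt n p (int k))) ` {..<2 * NN n p}" using that Xs' by simp
    then obtain k where "k < 2 * NN n p" "lissajous n p (tpt n p (int k)) = x" by auto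
    then have "\<exists>k. k < 2 * NN n p \<and> lissajous n p (tpt n p (int k)) = x" by blast
    then show ?thesis unfolding K_def by (rule someI_ex)
  qed
  have eq: "gv n p f = (\<Sum>x\<in>Xs n p. (\<lambda>k. g x * ind n p x k))"
  proof
    fix k
    show "gv n p f k = (\<Sum>x\<in>Xs n p. (\<lambda>k. g x * ind n p x k)) k"
    proof (cases "k < 2 * NN n p")
      case True
      let ?x = "lissajous n p (tpt n p (int k))"
      have xin: "?x \<in> Xs n p" unfolding Xs' using True by auto
      have "(\<Sum>x\<in>Xs n p. (\<lambda>k. g x * ind n p x k)) k = (\<Sum>x\<in>Xs n p. g x * ind n p x k)" by (rule fsum_apply)
      also have "\<dots> = (\<Sum>x\<in>Xs n p. if x = ?x then g ?x else 0)"
        by (intro sum.cong refl) (auto simp: ind_def True)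
      also have "\<dots> = g ?x" using xin finite_Xs by simp
      also have "\<dots> = f (tpt n p (int k))" unfolding g_def using H[OF _ True] Kp[OF xin] by auto
      finally show ?thesis unfolding gv_def using True by simp
    next
      case False
      have "(\<Sum>x\<in>Xs n p. (\<lambda>k. g x * ind n p x k)) k = (\<Sum>x\<in>Xs n p. g x * ind n p x k)" by (rule fsum_apply)
      also have "\<dots> = 0" by (auto simp: ind_def False)
      finally show ?thesis unfolding gv_def using False by simp
    qed
  qed
  show ?thesis unfolding eq
    by (intro GV.span_sum GV.span_scale GV.span_base) auto
qed

lemma ebf_lis: "ebf n p a t = (\<lambda>(x,y). cheb_T (fst a) x * cheb_T (snd a) y) (lissajous n p t)"
  unfolding ebf_def lissajous_def by (simp add: cheb_sin)

lemma gv_lin: "gv n p (\<lambda>t. \<Sum>a\<in>GammaL n p. c a * ebf n p a t) = (\<Sum>a\<in>GammaL n p. (\<lambda>k. c a * gv n p (ebf n p a) k))"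
proof
  fix k show "gv n p (\<lambda>t. \<Sum>a\<in>GammaL n p. c a * ebf n p a t) k = (\<Sum>a\<in>GammaL n p. (\<lambda>k. c a * gv n p (ebf n p a) k)) k"
    unfolding fsum_apply gv_def by (cases "k < 2 * NN n p") simp_all
qed

lemma coef_zero:
  assumes n: "n>0" and p: "p>0" and op: "odd p" and cp: "coprime n (n+p)"
    and Z: "(\<Sum>a\<in>GammaL n p. (\<lambda>k. c a * gv n p (ebf n p a) k)) = 0"
  shows "\<forall>a\<in>GammaL n p. c a = 0"
proof -
  have NN: "NN n p > 0" using n p by (simp add: NN_def)
  have g0: "gv n p (Egamma n p (lc n p c)) = 0" unfolding E_lc_fun gv_lin Z ..
  obtain A B where AB: "Egamma n p (lc n p c) = trigf (NN n p) A B"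
    using E_lc_PiTrig[OF n p] unfolding PiTrig_iff NN_def by blast
  have "trigf (NN n p) A B (pi * real k / real (NN n p)) = 0" if "k < 2 * NN n p" for k
  proof -
    have "gv n p (Egamma n p (lc n p c)) k = 0" using g0 by simp
    then show ?thesis using that unfolding gv_def AB tpt_eq[OF n] by simp
  qed
  then have "trigf (NN n p) A B = (\<lambda>t. 0)" by (rule unisolv[OF NN])
  then have "Egamma n p (lc n p c) = (\<lambda>t. 0)" using AB by simp
  then have "Qf n p c c = 0" using trig_inner_lc[OF n p op cp, of c c] by (simp add: trig_inner_def)
  then show ?thesis using Qf_zero by blast
qed

lemma sum_two:
  assumes "finite S" "a \<in> S" "b \<in> S" "a \<noteq> b"
  shows "(\<Sum>x\<in>S. (if x = a then 1 else if x = b then -1 else 0) * (X x :: real)) = X a - X b"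
proof -
  have "(\<Sum>x\<in>S. (if x = a then 1 else if x = b then -1 else 0) * X x) =
        (\<Sum>x\<in>S. (if x = a then X x else 0) - (if x = b then X x else 0))"
    by (intro sum.cong refl) (use assms in auto)
  also have "\<dots> = X a - X b" unfolding sum_subtractf using assms by simp
  finally show ?thesis .
qed

lemma inj_u:
  assumes n: "n>0" and p: "p>0" and op: "odd p" and cp: "coprime n (n+p)"
  shows "inj_on (\<lambda>a. gv n p (ebf n p a)) (GammaL n p)"
proof (rule inj_onI, rule ccontr)
  fix a b assume a: "a \<in> GammaL n p" and b: "b \<in> GammaL n p" and e: "gv n p (ebf n p a) = gv n p (ebf n p b)" and ne: "a \<noteq> b"
  define c where "c x = (if x = a then 1 else if x = b then -1 else (0::real))" for x
  have "(\<Sum>x\<in>GammaL n p. (\<lambda>k. c x * gv n p (ebf n p x) k)) = 0"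
  proof
    fix k
    show "(\<Sum>x\<in>GammaL n p. (\<lambda>k. c x * gv n p (ebf n p x) k)) k = 0 k"
      unfolding fsum_apply c_def using sum_two[OF finite_GammaL a b ne, of "\<lambda>x. gv n p (ebf n p x) k"] e by simp
  qed
  then have "c a = 0" using coef_zero[OF n p op cp] a by blast
  then show False unfolding c_def by simp
qed

lemma indep_u:
  assumes n: "n>0" and p: "p>0" and op: "odd p" and cp: "coprime n (n+p)"
  shows "GV.independent ((\<lambda>a. gv n p (ebf n p a)) ` GammaL n p)"
proof
  let ?u = "\<lambda>a. gv n p (ebf n p a)"
  assume "GV.dependent (?u ` GammaL n p)"
  then have "\<exists>w. (\<exists>v\<in>?u ` GammaL n p. w v \<noteq> 0) \<and> (\<Sum>v\<in>?u ` GammaL n p. (\<lambda>k. w v * v k)) = 0"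
    using GV.dependent_finite[OF finite_imageI[OF finite_GammaL[of n p], where h="?u"]] by simp
  then obtain w where w: "\<exists>v\<in>?u ` GammaL n p. w v \<noteq> 0" "(\<Sum>v\<in>?u ` GammaL n p. (\<lambda>k. w v * v k)) = 0"
    by blast
  have "(\<Sum>v\<in>?u ` GammaL n p. (\<lambda>k. w v * v k)) = (\<Sum>a\<in>GammaL n p. (\<lambda>k. w (?u a) * ?u a k))"
    by (rule sum.reindex[OF inj_u[OF n p op cp], unfolded comp_def])
  then have "\<forall>a\<in>GammaL n p. w (?u a) = 0" using coef_zero[OF n p op cp, of "\<lambda>a. w (?u a)"] w(2) by simp
  then show False using w(1) by auto
qed

lemma surj_E:
  assumes n: "n>0" and p: "p>0" and op: "odd p" and cp: "coprime n (n+p)"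
    and Q: "Q \<in> PiTrigL n p"
  shows "\<exists>c. Q = Egamma n p (lc n p c)"
proof -
  let ?G = "GammaL n p"
  let ?u = "\<lambda>a. gv n p (ebf n p a)"
  let ?U = "?u ` ?G"
  let ?I = "ind n p ` Xs n p"
  have NN: "NN n p > 0" using n p by (simp add: NN_def)
  have QT: "Q \<in> PiTrig (NN n p)" and QL: "\<And>k k'. lissajous n p (tpt n p k) = lissajous n p (tpt n p k') \<Longrightarrow> Q (tpt n p k) = Q (tpt n p k')"
  proof -
    have Q': "Q \<in> PiTrig (2*n*(n+p)) \<and> (\<forall>k k' :: int. lissajous n p (tpt n p k) = lissajous n p (tpt n p k') \<longrightarrow> Q (tpt n p k) = Q (tpt n p k'))"
      using Q unfolding PiTrigL_def by (rule CollectD)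
    show "Q \<in> PiTrig (NN n p)" using Q' unfolding NN_def by (rule conjunct1)
    show "\<And>k k'. lissajous n p (tpt n p k) = lissajous n p (tpt n p k') \<Longrightarrow> Q (tpt n p k) = Q (tpt n p k')"
      using Q' by blast
  qed
  have UI: "?U \<subseteq> GV.span ?I"
  proof
    fix v assume "v \<in> ?U"
    then obtain a where v: "v = ?u a" by auto
    show "v \<in> GV.span ?I" unfolding v by (rule span_ind) (simp add: ebf_lis)
  qed
  have QI: "gv n p Q \<in> GV.span ?I" by (rule span_ind) (rule QL)
  have fU: "finite ?U" by (simp add: finite_GammaL)
  have fI: "finite ?I" by (simp add: finite_Xs)
  have cU: "card ?U = card ?G" by (rule card_image[OF inj_u[OF n p op cp]])
  have cI: "card ?I \<le> card ?G"
    using card_image_le[OF finite_Xs, of "ind n p" n p] card_Xs[OF n p op cp] by linarith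
  have inspan: "gv n p Q \<in> GV.span ?U"
  proof (rule ccontr)
    assume nin: "gv n p Q \<notin> GV.span ?U"
    have ind: "GV.independent (insert (gv n p Q) ?U)"
      by (rule GV.independent_insertI[OF nin indep_u[OF n p op cp]])
    have sub: "insert (gv n p Q) ?U \<subseteq> GV.span ?I" using UI QI by (simp only: insert_subset)
    have c1: "card (insert (gv n p Q) ?U) \<le> card ?I" using GV.independent_span_bound[OF fI ind sub] by (rule conjunct2)
    have "?U \<subseteq> GV.span ?U" by (rule GV.span_superset)
    then have "gv n p Q \<notin> ?U" using nin by blast
    then have "card (insert (gv n p Q) ?U) = Suc (card ?U)" by (rule card_insert_disjoint[OF fU])
    then show False using c1 cI cU by linarith
  qed
  then have "gv n p Q \<in> range (\<lambda>w. \<Sum>v\<in>?U. (\<lambda>k. w v * v k))" unfolding GV.span_finite[OF fU] .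
  then obtain w where w: "gv n p Q = (\<Sum>v\<in>?U. (\<lambda>k. w v * v k))" by (rule rangeE)
  define c where "c a = w (?u a)" for a
  have "gv n p Q = (\<Sum>a\<in>?G. (\<lambda>k. c a * ?u a k))"
    unfolding w c_def by (rule sum.reindex[OF inj_u[OF n p op cp], unfolded comp_def])
  also have "\<dots> = gv n p (Egamma n p (lc n p c))" unfolding E_lc_fun gv_lin ..
  finally have gQ: "gv n p Q = gv n p (Egamma n p (lc n p c))" .
  have ET: "Egamma n p (lc n p c) \<in> PiTrig (NN n p)" using E_lc_PiTrig[OF n p, of c] by (simp add: NN_def)
  have "(\<lambda>t. Q t + (-1) * Egamma n p (lc n p c) t) \<in> PiTrig (NN n p)"
    by (rule PiTrig_add[OF QT PiTrig_scale[OF ET]])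
  then obtain A B where AB: "(\<lambda>t. Q t + (-1) * Egamma n p (lc n p c) t) = trigf (NN n p) A B"
    unfolding PiTrig_iff by blast
  have "trigf (NN n p) A B (pi * real k / real (NN n p)) = 0" if "k < 2 * NN n p" for k
  proof -
    have "gv n p Q k = gv n p (Egamma n p (lc n p c)) k" using gQ by simp
    then have "Q (tpt n p (int k)) + (-1) * Egamma n p (lc n p c) (tpt n p (int k)) = 0"
      using that unfolding gv_def by simp
    then show ?thesis using fun_cong[OF AB, of "tpt n p (int k)"] unfolding tpt_eq[OF n] by simp
  qed
  then have "trigf (NN n p) A B = (\<lambda>t. 0)" by (rule unisolv[OF NN])
  then have z: "Q t + (-1) * Egamma n p (lc n p c) t = 0" for t using fun_cong[OF AB, of t] by simp
  have "Q t = Egamma n p (lc n p c) t" for t using z[of t] by linarith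
  then have "Q = Egamma n p (lc n p c)" by (rule ext)
  then show ?thesis by blast
qed

theorem theorem2:
  fixes n p :: nat
  assumes "n > 0" and "p > 0" and "odd p" and "coprime n (n + p)"
  shows "(\<forall>P\<in>PiL n p. \<forall>Q\<in>PiL n p. \<forall>a b :: real.
            Egamma n p (\<lambda>z. a * P z + b * Q z) = (\<lambda>t. a * Egamma n p P t + b * Egamma n p Q t))
       \<and> bij_betw (Egamma n p) (PiL n p) (PiTrigL n p)
       \<and> (\<forall>P\<in>PiL n p. \<forall>Q\<in>PiL n p.
            trig_inner (Egamma n p P) (Egamma n p Q) = cheb_inner P Q)"
proof (intro conjI)
  note n = assms(1) and p = assms(2) and op = assms(3) and cp = assms(4)
  show "\<forall>P\<in>PiL n p. \<forall>Q\<in>PiL n p. \<forall>a b :: real.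
            Egamma n p (\<lambda>z. a * P z + b * Q z) = (\<lambda>t. a * Egamma n p P t + b * Egamma n p Q t)"
    unfolding Egamma_def by simp
  show "\<forall>P\<in>PiL n p. \<forall>Q\<in>PiL n p. trig_inner (Egamma n p P) (Egamma n p Q) = cheb_inner P Q"
  proof (intro ballI)
    fix P Q assume "P \<in> PiL n p" "Q \<in> PiL n p"
    then obtain c d where "P = lc n p c" "Q = lc n p d" unfolding PiL_iff by blast
    then show "trig_inner (Egamma n p P) (Egamma n p Q) = cheb_inner P Q"
      using trig_inner_lc[OF n p op cp] cheb_inner_lc by simp
  qed
  show "bij_betw (Egamma n p) (PiL n p) (PiTrigL n p)"
  proof (rule bij_betw_imageI)
    show "inj_on (Egamma n p) (PiL n p)"
    proof (rule inj_onI)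
      fix P Q assume "P \<in> PiL n p" "Q \<in> PiL n p" and e: "Egamma n p P = Egamma n p Q"
      then obtain c d where "P = lc n p c" "Q = lc n p d" unfolding PiL_iff by blast
      then show "P = Q" using E_inj[OF n p op cp] e by simp
    qed
    show "Egamma n p ` PiL n p = PiTrigL n p"
    proof
      show "Egamma n p ` PiL n p \<subseteq> PiTrigL n p" using E_PiTrigL[OF n p] by blast
      show "PiTrigL n p \<subseteq> Egamma n p ` PiL n p"
      proof
        fix Q assume "Q \<in> PiTrigL n p"
        then obtain c where "Q = Egamma n p (lc n p c)" using surj_E[OF n p op cp] by blast
        moreover have "lc n p c \<in> PiL n p" unfolding PiL_iff by blast
        ultimately show "Q \<in> Egamma n p ` PiL n p" by blast
      qed
    qed
  qed
qed


end
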